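(* Let $\mathcal{H}$ be a complex Hilbert space and let $A\in\mathcal{B}(\mathcal{H})$ be a hyponormal operator, i.e. $A^*A-AA^*\ge 0$. Define \[ \xi_{|A|}=\inf_{\|x\|=1}\left\{\frac{\langle(|A|-|A^*|)x,x\rangle}{\langle(|A|+|A^*|)x,x\rangle}\right\}. \] Then for every non-negative, non-decreasing, operator convex function $f$ on $[0,\infty)$, \[ f(\omega(A))\le \frac12\left\| f\!\left(\frac{1}{1+\frac{\xi_{|A|}^2}{8}}|A|\right)+f\!\left(\frac{1}{1+\frac{\xi_{|A|}^2}{8}}|A^*|\right)\right\|. \]
   Context: $\mathcal{B}(\mathcal{H})$ denotes the algebra of bounded linear operators on $\mathcal{H}$; $|A|=(A^*A)^{1/2}$; $\omega(A)=\sup_{\|x\|=1}|\langle Ax,x\rangle|$ is the numerical radius and $\|\cdot\|$ the operator norm. A continuous real function $f$ on an interval $I$ is operator convex if $f(\lambda S+(1-\lambda)T)\le \lambda f(S)+(1-\lambda)f(T)$ for all self-adjoint $S,T$ with spectra in $I$ and all $\lambda\in[0,1]$. *)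

theory Defs
  imports "HOL-Analysis.Analysis" "HOL-Computational_Algebra.Polynomial"
begin

class complex_inner = real_normed_vector +
  fixes scaleC :: "complex \<Rightarrow> 'a \<Rightarrow> 'a"
  fixes cinner :: "'a \<Rightarrow> 'a \<Rightarrow> complex"
  assumes scaleC_add_right: "scaleC a (x + y) = scaleC a x + scaleC a y"
    and scaleC_add_left: "scaleC (a + b) x = scaleC a x + scaleC b x"
    and scaleC_scaleC: "scaleC a (scaleC b x) = scaleC (a * b) x"
    and scaleC_one: "scaleC 1 x = x"
    and scaleR_scaleC: "scaleR r x = scaleC (complex_of_real r) x"
    and cinner_commute: "cinner x y = cnj (cinner y x)"
    and cinner_add_left: "cinner (x + y) z = cinner x z + cinner y z"
    and cinner_scaleC_left: "cinner (scaleC c x) y = cnj c * cinner x y"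
    and cinner_self_real: "Im (cinner x x) = 0"
    and cinner_self_ge_zero: "0 \<le> Re (cinner x x)"
    and cinner_eq_zero_iff: "cinner x x = 0 \<longleftrightarrow> x = 0"
    and norm_eq_sqrt_cinner: "norm x = sqrt (Re (cinner x x))"

class chilbert = complex_inner + complete_space

definition bop :: "('a::complex_inner \<Rightarrow> 'a) \<Rightarrow> bool" where
  "bop T \<longleftrightarrow> bounded_linear T \<and> (\<forall>c x. T (scaleC c x) = scaleC c (T x))"

definition adj :: "('a::complex_inner \<Rightarrow> 'a) \<Rightarrow> ('a \<Rightarrow> 'a)" where
  "adj T = (THE S. \<forall>x y. cinner (T x) y = cinner x (S y))"

definition pos_op :: "('a::complex_inner \<Rightarrow> 'a) \<Rightarrow> bool" where
  "pos_op T \<longleftrightarrow> bop T \<and> (\<forall>x. Im (cinner x (T x)) = 0 \<and> 0 \<le> Re (cinner x (T x)))"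

definition op_le :: "('a::complex_inner \<Rightarrow> 'a) \<Rightarrow> ('a \<Rightarrow> 'a) \<Rightarrow> bool" where
  "op_le S T \<longleftrightarrow> pos_op (\<lambda>x. T x - S x)"

definition poly_op :: "real poly \<Rightarrow> ('a::complex_inner \<Rightarrow> 'a) \<Rightarrow> ('a \<Rightarrow> 'a)" where
  "poly_op p T = (\<lambda>x. \<Sum>i\<le>degree p. coeff p i *\<^sub>R (T ^^ i) x)"

text \<open>For a positive operator T (spectrum contained in [0, norm T]) and f continuous
  on [0, norm T], f(T) is the norm limit of p_n(T) for any sequence of real
  polynomials p_n converging uniformly to f on [0, norm T].\<close>
definition fcalc :: "(real \<Rightarrow> real) \<Rightarrow> ('a::complex_inner \<Rightarrow> 'a) \<Rightarrow> ('a \<Rightarrow> 'a)" where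
  "fcalc f T = (THE S. bop S \<and>
     (\<forall>p :: nat \<Rightarrow> real poly.
        uniform_limit {0..onorm T} (\<lambda>n. poly (p n)) f sequentially \<longrightarrow>
        ((\<lambda>n. onorm (\<lambda>x. poly_op (p n) T x - S x)) \<longlonglongrightarrow> 0)))"

definition abs_op :: "('a::complex_inner \<Rightarrow> 'a) \<Rightarrow> ('a \<Rightarrow> 'a)" where
  "abs_op T = fcalc sqrt (\<lambda>x. adj T (T x))"

definition hyponormal :: "('a::complex_inner \<Rightarrow> 'a) \<Rightarrow> bool" where
  "hyponormal A \<longleftrightarrow> bop A \<and> pos_op (\<lambda>x. adj A (A x) - A (adj A x))"

definition numrad :: "('a::complex_inner \<Rightarrow> 'a) \<Rightarrow> real" where
  "numrad A = (SUP x\<in>{x. norm x = 1}. cmod (cinner x (A x)))"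

text \<open>Operator convexity on [0,\<infinity>) (operators on the given space): self-adjoint
  operators with spectrum in [0,\<infinity>) are exactly the positive ones.\<close>
definition operator_convex :: "'a::complex_inner itself \<Rightarrow> (real \<Rightarrow> real) \<Rightarrow> bool" where
  "operator_convex _ f \<longleftrightarrow> continuous_on {0..} f \<and>
     (\<forall>(S::'a \<Rightarrow> 'a) T (l::real). pos_op S \<and> pos_op T \<and> 0 \<le> l \<and> l \<le> 1 \<longrightarrow>
        op_le (fcalc f (\<lambda>x. l *\<^sub>R S x + (1 - l) *\<^sub>R T x))
              (\<lambda>x. l *\<^sub>R fcalc f S x + (1 - l) *\<^sub>R fcalc f T x))"

text \<open>xi_|A| = inf over unit x of <(|A|-|A*|)x,x> / <(|A|+|A*|)x,x>
  (unit vectors where the denominator vanishes, where the quotient is undefined, are omitted).\<close>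
definition xi_op :: "('a::complex_inner \<Rightarrow> 'a) \<Rightarrow> real" where
  "xi_op A = Inf {Re (cinner x (abs_op A x - abs_op (adj A) x)) /
                  Re (cinner x (abs_op A x + abs_op (adj A) x)) | x.
                  norm x = 1 \<and> Re (cinner x (abs_op A x + abs_op (adj A) x)) \<noteq> 0}"

end

theory Submission
  imports Defs "HOL-Computational_Algebra.Fundamental_Theorem_Algebra"
begin



lemma scaleC_zero_right [simp]: "scaleC a (0::'a::complex_inner) = 0"
proof -
  have "scaleC a (0::'a) = scaleC a 0 + scaleC a 0"
    by (metis add.right_neutral scaleC_add_right)
  then show ?thesis by simp
qed

lemma scaleC_zero_left [simp]: "scaleC 0 (x::'a::complex_inner) = 0"
proof -
  have "scaleC 0 x = scaleC 0 x + scaleC 0 x"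
    by (metis add.right_neutral scaleC_add_left)
  then show ?thesis by simp
qed

lemma scaleC_minus_left: "scaleC (- a) (x::'a::complex_inner) = - scaleC a x"
proof -
  have "scaleC (- a) x + scaleC a x = 0"
    by (metis scaleC_add_left add.left_inverse scaleC_zero_left)
  then show ?thesis by (simp add: eq_neg_iff_add_eq_0)
qed

lemma scaleC_minus_right: "scaleC a (- x::'a::complex_inner) = - scaleC a x"
proof -
  have "scaleC a (- x) + scaleC a x = 0"
    by (metis scaleC_add_right add.left_inverse scaleC_zero_right)
  then show ?thesis by (simp add: eq_neg_iff_add_eq_0)
qed

lemma scaleC_diff_right: "scaleC a (x - y::'a::complex_inner) = scaleC a x - scaleC a y"
  by (metis diff_conv_add_uminus scaleC_add_right scaleC_minus_right)

lemma scaleC_diff_left: "scaleC (a - b) (x::'a::complex_inner) = scaleC a x - scaleC b x"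
  by (metis diff_conv_add_uminus scaleC_add_left scaleC_minus_left)

lemma scaleC_of_real: "scaleC (complex_of_real r) (x::'a::complex_inner) = r *\<^sub>R x"
  by (simp add: scaleR_scaleC)

lemma cinner_cnj_sym: "cnj (cinner y x) = cinner x (y::'a::complex_inner)"
  using cinner_commute[of x y] by simp

lemma cinner_add_right: "cinner (x::'a::complex_inner) (y + z) = cinner x y + cinner x z"
proof -
  have "cinner x (y + z) = cnj (cinner (y + z) x)" by (rule cinner_commute)
  also have "\<dots> = cnj (cinner y x) + cnj (cinner z x)" by (simp add: cinner_add_left)
  finally show ?thesis by (simp add: cinner_cnj_sym)
qed

lemma cinner_scaleC_right: "cinner (x::'a::complex_inner) (scaleC c y) = c * cinner x y"
proof -
  have "cinner x (scaleC c y) = cnj (cinner (scaleC c y) x)" by (rule cinner_commute)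
  also have "\<dots> = c * cnj (cinner y x)" by (simp add: cinner_scaleC_left)
  finally show ?thesis by (simp add: cinner_cnj_sym)
qed

lemma cinner_zero_left [simp]: "cinner 0 (y::'a::complex_inner) = 0"
proof -
  have "cinner 0 y = cinner 0 y + cinner 0 y" using cinner_add_left[of 0 0 y] by simp
  then show ?thesis by simp
qed

lemma cinner_zero_right [simp]: "cinner (x::'a::complex_inner) 0 = 0"
  using cinner_commute[of x 0] by simp

lemma cinner_minus_left: "cinner (- x::'a::complex_inner) y = - cinner x y"
proof -
  have "cinner (- x) y + cinner x y = 0" using cinner_add_left[of "- x" x y] by simp
  then show ?thesis by (simp add: eq_neg_iff_add_eq_0)
qed

lemma cinner_minus_right: "cinner (x::'a::complex_inner) (- y) = - cinner x y"
proof -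
  have "cinner x (- y) + cinner x y = 0" using cinner_add_right[of x "- y" y] by simp
  then show ?thesis by (simp add: eq_neg_iff_add_eq_0)
qed

lemma cinner_diff_left: "cinner (x - y::'a::complex_inner) z = cinner x z - cinner y z"
  using cinner_add_left[of x "- y" z] by (simp add: cinner_minus_left)

lemma cinner_diff_right: "cinner (x::'a::complex_inner) (y - z) = cinner x y - cinner x z"
  using cinner_add_right[of x y "- z"] by (simp add: cinner_minus_right)

lemma cinner_scaleR_left: "cinner (r *\<^sub>R x::'a::complex_inner) y = of_real r * cinner x y"
  by (simp add: scaleR_scaleC cinner_scaleC_left)

lemma cinner_scaleR_right: "cinner (x::'a::complex_inner) (r *\<^sub>R y) = of_real r * cinner x y"
  by (simp add: scaleR_scaleC cinner_scaleC_right)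

lemma cinner_sum_right: "cinner (x::'a::complex_inner) (sum f A) = (\<Sum>i\<in>A. cinner x (f i))"
  by (induction A rule: infinite_finite_induct) (auto simp: cinner_add_right)

lemma Re_cinner_self: "Re (cinner x x) = (norm (x::'a::complex_inner))\<^sup>2"
  by (simp add: norm_eq_sqrt_cinner cinner_self_ge_zero)

lemma cinner_self: "cinner x x = complex_of_real ((norm (x::'a::complex_inner))\<^sup>2)"
  by (simp add: complex_eq_iff Re_cinner_self cinner_self_real)

lemma Re_cinner_sym: "Re (cinner (y::'a::complex_inner) x) = Re (cinner x y)"
  by (subst cinner_commute) simp

lemma norm_add_sq:
  "(norm (x + y::'a::complex_inner))\<^sup>2 = (norm x)\<^sup>2 + (norm y)\<^sup>2 + 2 * Re (cinner x y)"
proof -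
  have "(norm (x + y))\<^sup>2 = Re (cinner (x+y) (x+y))" by (simp add: Re_cinner_self)
  also have "\<dots> = Re (cinner x x) + Re (cinner y y) + Re (cinner x y) + Re (cinner y x)"
    by (simp add: cinner_add_left cinner_add_right)
  finally show ?thesis by (simp add: Re_cinner_self Re_cinner_sym)
qed

lemma norm_diff_sq:
  "(norm (x - y::'a::complex_inner))\<^sup>2 = (norm x)\<^sup>2 + (norm y)\<^sup>2 - 2 * Re (cinner x y)"
  using norm_add_sq[of x "- y"] by (simp add: cinner_minus_right)

lemma norm_scaleC: "norm (scaleC c (x::'a::complex_inner)) = cmod c * norm x"
proof -
  have "cinner (scaleC c x) (scaleC c x) = (c * cnj c) * cinner x x"
    by (simp add: cinner_scaleC_left cinner_scaleC_right)
  also have "\<dots> = complex_of_real ((cmod c * norm x)\<^sup>2)"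
    by (simp add: cinner_self complex_norm_square[symmetric] power_mult_distrib)
  finally have "(norm (scaleC c x))\<^sup>2 = (cmod c * norm x)\<^sup>2"
    by (simp add: Re_cinner_self[symmetric])
  then show ?thesis by (simp add: power2_eq_iff_nonneg)
qed

lemma cinner_ext:
  assumes "\<And>z. cinner z x = cinner z (y::'a::complex_inner)"
  shows "x = y"
proof -
  have "cinner (x - y) (x - y) = 0" using assms[of "x - y"] by (simp add: cinner_diff_right)
  then show ?thesis by (simp add: cinner_eq_zero_iff)
qed

section \<open>Cauchy-Schwarz for hermitian nonnegative forms\<close>

lemma quad_nonneg_aux:
  fixes a c d :: real
  assumes "\<And>s. 0 \<le> a - 2 * s * c + s\<^sup>2 * c * d" and "0 \<le> c" and "0 \<le> d" and "0 \<le> a"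
  shows "c \<le> a * d"
proof (cases "d > 0")
  case True
  have "0 \<le> a - 2 * (1/d) * c + (1/d)\<^sup>2 * c * d" by (rule assms(1))
  also have "\<dots> = a - c / d" using True by (simp add: power2_eq_square field_simps)
  finally show ?thesis using True by (simp add: field_simps)
next
  case False
  then have d: "d = 0" using assms by simp
  show ?thesis
  proof (rule ccontr)
    assume "\<not> c \<le> a * d"
    then have c: "c > 0" using d by simp
    have "0 \<le> a - 2 * ((a+1)/(2*c)) * c + ((a+1)/(2*c))\<^sup>2 * c * d" by (rule assms(1))
    also have "\<dots> = -1" using c d by (simp add: field_simps)
    finally show False by simp
  qed
qed

lemma herm_form_cs:
  fixes B :: "'a::complex_inner \<Rightarrow> 'a \<Rightarrow> complex"
  assumes add: "\<And>x y z. B (x + y) z = B x z + B y z"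
    and sc: "\<And>c x y. B (scaleC c x) y = cnj c * B x y"
    and herm: "\<And>x y. B x y = cnj (B y x)"
    and pos: "\<And>x. 0 \<le> Re (B x x)"
  shows "(cmod (B x y))\<^sup>2 \<le> Re (B x x) * Re (B y y)"
proof -
  have addr: "\<And>x y z. B x (y + z) = B x y + B x z"
    by (metis add herm complex_cnj_add)
  have scr: "\<And>c x y. B x (scaleC c y) = c * B x y"
    by (metis sc herm complex_cnj_cnj complex_cnj_mult)
  define b where "b = B x y"
  have bb: "b * cnj b = (complex_of_real (cmod b))\<^sup>2" using complex_norm_square[of b] by simp
  have bb2: "b * cnj b = complex_of_real (cmod b) * complex_of_real (cmod b)" using bb by (simp add: power2_eq_square)
  define c where "c = (cmod b)\<^sup>2"
  have key: "0 \<le> Re (B x x) - 2 * s * c + s\<^sup>2 * c * Re (B y y)" for s :: real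
  proof -
    define u where "u = - (complex_of_real s * cnj b)"
    have "B (x + scaleC u y) (x + scaleC u y) = B x x + u * b + cnj u * cnj b + cnj u * u * B y y"
      by (simp add: add addr sc scr b_def herm[of y x] algebra_simps)
    moreover have "u * b = - complex_of_real (s * c)"
      by (simp add: u_def c_def bb[symmetric] mult.commute mult.left_commute)
    moreover have "cnj u * cnj b = - complex_of_real (s * c)"
      by (simp add: u_def c_def bb[symmetric] mult.commute mult.left_commute)
    moreover have "cnj u * u = complex_of_real (s\<^sup>2 * c)"
      by (simp add: u_def c_def bb2[symmetric] power2_eq_square mult.commute mult.left_commute)
    ultimately have "Re (B (x + scaleC u y) (x + scaleC u y)) = Re (B x x) - 2 * s * c + s\<^sup>2 * c * Re (B y y)"
      by simp
    then show ?thesis using pos by metis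
  qed
  have "c \<le> Re (B x x) * Re (B y y)"
    by (rule quad_nonneg_aux[OF key]) (auto simp: c_def pos)
  then show ?thesis by (simp add: c_def b_def)
qed

lemma cinner_cs: "cmod (cinner x y) \<le> norm (x::'a::complex_inner) * norm y"
proof -
  have "(cmod (cinner x y))\<^sup>2 \<le> Re (cinner x x) * Re (cinner y y)"
  proof (rule herm_form_cs)
    show "cinner (x + y) z = cinner x z + cinner y z" for x y z :: 'a by (rule cinner_add_left)
    show "cinner (scaleC c x) y = cnj c * cinner x y" for c and x y :: 'a by (rule cinner_scaleC_left)
    show "cinner x y = cnj (cinner y x)" for x y :: 'a by (rule cinner_commute)
    show "0 \<le> Re (cinner x x)" for x :: 'a by (rule cinner_self_ge_zero)
  qed
  then have "(cmod (cinner x y))\<^sup>2 \<le> (norm x * norm y)\<^sup>2"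
    by (simp add: Re_cinner_self power_mult_distrib)
  then show ?thesis by (rule power2_le_imp_le) simp
qed

lemma Re_cinner_le: "Re (cinner x y) \<le> norm (x::'a::complex_inner) * norm y"
  using cinner_cs[of x y] abs_Re_le_cmod[of "cinner x y"] by linarith




lemma bop_bl: "bop T \<Longrightarrow> bounded_linear T"
  by (simp add: bop_def)

lemma bop_scaleC: "bop T \<Longrightarrow> T (scaleC c x) = scaleC c (T x)"
  by (simp add: bop_def)

lemma bop_add: "bop T \<Longrightarrow> T (x + y) = T x + T y"
proof -
  assume "bop T" then interpret bounded_linear T by (rule bop_bl)
  show ?thesis by (rule add)
qed

lemma bop_diff: "bop T \<Longrightarrow> T (x - y) = T x - T y"
proof -
  assume "bop T" then interpret bounded_linear T by (rule bop_bl)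
  show ?thesis by (rule diff)
qed

lemma bop_minus: "bop T \<Longrightarrow> T (- x) = - T x"
proof -
  assume "bop T" then interpret bounded_linear T by (rule bop_bl)
  show ?thesis by (rule neg)
qed

lemma bop_zero: "bop T \<Longrightarrow> T 0 = 0"
proof -
  assume "bop T" then interpret bounded_linear T by (rule bop_bl)
  show ?thesis by (rule zero)
qed

lemma bop_scaleR: "bop T \<Longrightarrow> T (r *\<^sub>R x) = r *\<^sub>R T x"
proof -
  assume "bop T" then interpret bounded_linear T by (rule bop_bl)
  show ?thesis by (rule scale)
qed

lemma bop_sum: "bop T \<Longrightarrow> T (sum g A) = (\<Sum>a\<in>A. T (g a))"
proof -
  assume "bop T" then interpret bounded_linear T by (rule bop_bl)
  show ?thesis by (rule sum)
qed

lemma bop_norm: "bop T \<Longrightarrow> norm (T x) \<le> onorm T * norm x"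
  by (rule onorm[OF bop_bl])

lemma bop_onorm_nonneg: "bop T \<Longrightarrow> 0 \<le> onorm T"
  by (rule onorm_pos_le[OF bop_bl])

lemma bopI:
  fixes T :: "'a::complex_inner \<Rightarrow> 'a"
  assumes "\<And>x y. T (x + y) = T x + T y" and "\<And>c x. T (scaleC c x) = scaleC c (T x)"
    and "\<And>x. norm (T x) \<le> K * norm x"
  shows "bop T"
  unfolding bop_def
proof (intro conjI allI)
  show "bounded_linear T"
  proof (rule bounded_linear_intro[where K = K])
    show "T (r *\<^sub>R x) = r *\<^sub>R T x" for r x
      using assms(2)[of "complex_of_real r" x] by (simp add: scaleR_scaleC)
    show "norm (T x) \<le> norm x * K" for x using assms(3)[of x] by (simp add: mult.commute)
  qed (rule assms(1))
qed (rule assms(2))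

lemma bop_id: "bop (\<lambda>x::'a::complex_inner. x)"
  by (rule bopI[where K=1]) auto

lemma bop_comp: "bop T \<Longrightarrow> bop S \<Longrightarrow> bop (\<lambda>x. T (S x))"
  apply (rule bopI[where K = "onorm T * onorm S"])
  apply (simp add: bop_add)
  apply (simp add: bop_scaleC)
  by (metis (no_types, opaque_lifting) bop_norm bop_onorm_nonneg mult.assoc mult_left_mono order_trans)

lemma bop_plus: "bop T \<Longrightarrow> bop S \<Longrightarrow> bop (\<lambda>x. T x + S x)"
proof (rule bopI[where K = "onorm T + onorm S"])
  assume T: "bop T" and S: "bop S"
  show "T (x + y) + S (x + y) = T x + S x + (T y + S y)" for x y by (simp add: bop_add T S)
  show "T (scaleC c x) + S (scaleC c x) = scaleC c (T x + S x)" for c x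
    by (simp add: bop_scaleC T S scaleC_add_right)
  show "norm (T x + S x) \<le> (onorm T + onorm S) * norm x" for x
    using norm_triangle_ineq[of "T x" "S x"] bop_norm[OF T, of x] bop_norm[OF S, of x]
    by (simp add: distrib_right)
qed

lemma bop_uminus: "bop T \<Longrightarrow> bop (\<lambda>x. - T x)"
proof (rule bopI[where K = "onorm T"])
  assume T: "bop T"
  show "- T (x + y) = - T x + - T y" for x y by (simp add: bop_add T)
  show "- T (scaleC c x) = scaleC c (- T x)" for c x by (simp add: bop_scaleC T scaleC_minus_right)
  show "norm (- T x) \<le> onorm T * norm x" for x using bop_norm[OF T, of x] by simp
qed

lemma bop_minus_op: "bop T \<Longrightarrow> bop S \<Longrightarrow> bop (\<lambda>x. T x - S x)"
  using bop_plus[of T "\<lambda>x. - S x"] bop_uminus[of S] by simp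

lemma bop_scaleR_op: "bop T \<Longrightarrow> bop (\<lambda>x. r *\<^sub>R T x)"
proof (rule bopI[where K = "\<bar>r\<bar> * onorm T"])
  assume T: "bop T"
  show "r *\<^sub>R T (x + y) = r *\<^sub>R T x + r *\<^sub>R T y" for x y by (simp add: bop_add T scaleR_add_right)
  show "r *\<^sub>R T (scaleC c x) = scaleC c (r *\<^sub>R T x)" for c x
    by (simp add: bop_scaleC T scaleR_scaleC scaleC_scaleC mult.commute)
  show "norm (r *\<^sub>R T x) \<le> \<bar>r\<bar> * onorm T * norm x" for x
    using bop_norm[OF T, of x] by (simp add: mult.assoc mult_left_mono)
qed

lemma bop_const: "bop (\<lambda>x::'a::complex_inner. r *\<^sub>R x)"
proof -
  have "bop (\<lambda>x::'a. r *\<^sub>R (\<lambda>x. x) x)" by (rule bop_scaleR_op[OF bop_id])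
  then show ?thesis by simp
qed

definition herm :: "('a::complex_inner \<Rightarrow> 'a) \<Rightarrow> bool" where
  "herm T \<longleftrightarrow> (\<forall>x y. cinner x (T y) = cinner (T x) y)"

lemma hermD: "herm T \<Longrightarrow> cinner x (T y) = cinner (T x) y"
  by (simp add: herm_def)

lemma herm_real: "herm T \<Longrightarrow> Im (cinner x (T x)) = 0"
proof -
  assume "herm T"
  then have "cinner x (T x) = cnj (cinner x (T x))"
    by (metis hermD cinner_commute)
  then show ?thesis by (metis cnj.simps(2) complex.sel(2) neg_equal_zero)
qed

lemma herm_cinner_real: "herm T \<Longrightarrow> cinner x (T x) = complex_of_real (Re (cinner x (T x)))"
  by (simp add: complex_eq_iff herm_real)

lemma pos_opD: "pos_op T \<Longrightarrow> 0 \<le> Re (cinner x (T x))"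
  by (simp add: pos_op_def)

lemma pos_op_bop: "pos_op T \<Longrightarrow> bop T"
  by (simp add: pos_op_def)

lemma real_form_herm:
  fixes T :: "'a::complex_inner \<Rightarrow> 'a"
  assumes T: "bop T" and im: "\<And>z. Im (cinner z (T z)) = 0"
  shows "herm T"
proof -
  have e1: "Im (cinner u (T v)) + Im (cinner v (T u)) = 0" for u v
  proof -
    have "cinner (u + v) (T (u + v)) = cinner u (T u) + cinner v (T v) + (cinner u (T v) + cinner v (T u))"
      by (simp add: bop_add[OF T] cinner_add_left cinner_add_right)
    then show ?thesis using im[of "u+v"] im[of u] im[of v] by simp
  qed
  have e2: "Re (cinner u (T v)) - Re (cinner v (T u)) = 0" for u v
  proof -
    have "Im (cinner u (T (scaleC \<i> v))) + Im (cinner (scaleC \<i> v) (T u)) = 0" by (rule e1)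
    then show ?thesis by (simp add: bop_scaleC[OF T] cinner_scaleC_right cinner_scaleC_left)
  qed
  show ?thesis unfolding herm_def
  proof (intro allI)
    fix x y
    have a: "Re (cinner (T x) y) = Re (cinner y (T x))" by (rule Re_cinner_sym)
    have b: "Im (cinner (T x) y) = - Im (cinner y (T x))" by (subst cinner_commute) simp
    show "cinner x (T y) = cinner (T x) y"
      using e1[of x y] e2[of x y] a b by (simp add: complex_eq_iff)
  qed
qed

lemma pos_herm: "pos_op T \<Longrightarrow> herm T"
  by (rule real_form_herm) (auto simp: pos_op_def)

lemma pos_form_cs:
  assumes P: "pos_op P"
  shows "(norm (P x))\<^sup>2 \<le> onorm P * Re (cinner x (P x))"
proof -
  have B: "bop P" using P by (rule pos_op_bop)
  have H: "herm P" using P by (rule pos_herm)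
  have cs: "(cmod (cinner x (P (P x))))\<^sup>2 \<le> Re (cinner x (P x)) * Re (cinner (P x) (P (P x)))"
  proof (rule herm_form_cs[where B = "\<lambda>u v. cinner u (P v)"])
    show "cinner (u + v) (P w) = cinner u (P w) + cinner v (P w)" for u v w by (rule cinner_add_left)
    show "cinner (scaleC c u) (P v) = cnj c * cinner u (P v)" for c u v by (rule cinner_scaleC_left)
    show "cinner u (P v) = cnj (cinner v (P u))" for u v
      by (metis H hermD cinner_commute)
    show "0 \<le> Re (cinner u (P u))" for u using P by (rule pos_opD)
  qed
  have e: "cinner x (P (P x)) = complex_of_real ((norm (P x))\<^sup>2)"
    using hermD[OF H, of x "P x"] by (simp add: cinner_self)
  have r: "Re (cinner (P x) (P (P x))) \<le> onorm P * (norm (P x))\<^sup>2"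
  proof -
    have "Re (cinner (P x) (P (P x))) \<le> norm (P x) * norm (P (P x))" by (rule Re_cinner_le)
    also have "\<dots> \<le> norm (P x) * (onorm P * norm (P x))"
      by (rule mult_left_mono[OF bop_norm[OF B]]) simp
    finally show ?thesis by (simp add: power2_eq_square mult_ac)
  qed
  have R0: "0 \<le> Re (cinner x (P x))" using P by (rule pos_opD)
  have e': "cmod (cinner x (P (P x))) = (norm (P x))\<^sup>2"
    by (simp only: e norm_of_real) simp
  have "((norm (P x))\<^sup>2)\<^sup>2 \<le> Re (cinner x (P x)) * (onorm P * (norm (P x))\<^sup>2)"
    using cs mult_left_mono[OF r R0] unfolding e' by linarith
  then have "(norm (P x))\<^sup>2 * (norm (P x))\<^sup>2 \<le> (onorm P * Re (cinner x (P x))) * (norm (P x))\<^sup>2"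
    by (simp add: power2_eq_square mult_ac)
  show ?thesis
  proof (cases "norm (P x) = 0")
    case True then show ?thesis using R0 bop_onorm_nonneg[OF B] by simp
  next
    case False
    then have "0 < (norm (P x))\<^sup>2" by simp
    with \<open>(norm (P x))\<^sup>2 * (norm (P x))\<^sup>2 \<le> (onorm P * Re (cinner x (P x))) * (norm (P x))\<^sup>2\<close>
    show ?thesis using mult_le_cancel_right_pos by blast
  qed
qed




section \<open>Riesz representation\<close>

lemma parallelogram:
  "(norm (a - b::'a::complex_inner))\<^sup>2 = 2 * (norm a)\<^sup>2 + 2 * (norm b)\<^sup>2 - (norm (a + b))\<^sup>2"
  using norm_add_sq[of a b] norm_diff_sq[of a b] by simp

lemma riesz:
  fixes \<phi> :: "'a::chilbert \<Rightarrow> complex"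
  assumes add: "\<And>x y. \<phi> (x + y) = \<phi> x + \<phi> y"
    and sc: "\<And>c x. \<phi> (scaleC c x) = c * \<phi> x"
    and bd: "\<And>x. cmod (\<phi> x) \<le> K * norm x"
  shows "\<exists>z. \<forall>x. \<phi> x = cinner z x"
proof (cases "\<forall>x. \<phi> x = 0")
  case True
  then show ?thesis by (intro exI[of _ 0]) simp
next
  case False
  then obtain u0 where u0: "\<phi> u0 \<noteq> 0" by blast
  define u where "u = scaleC (1 / \<phi> u0) u0"
  have u1: "\<phi> u = 1" using u0 by (simp add: u_def sc)
  have bl: "bounded_linear \<phi>"
  proof (rule bounded_linear_intro[where K = K])
    show "\<phi> (r *\<^sub>R x) = r *\<^sub>R \<phi> x" for r x
      by (simp add: scaleR_scaleC sc scaleR_conv_of_real)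
    show "norm (\<phi> x) \<le> norm x * K" for x using bd[of x] by (simp add: mult.commute)
  qed (rule add)
  interpret phi: bounded_linear \<phi> by (rule bl)
  have phi0: "\<phi> 0 = 0" by (rule phi.zero)
  have phidiff: "\<phi> (x - y) = \<phi> x - \<phi> y" for x y by (rule phi.diff)
  define Ks where "Ks = {k. \<phi> k = 0}"
  define D where "D = (\<lambda>k. norm (u - k)) ` Ks"
  define d where "d = Inf D"
  have K0: "0 \<in> Ks" using phi0 by (simp add: Ks_def)
  then have Dne: "D \<noteq> {}" unfolding D_def by blast
  have Dbd: "bdd_below D" unfolding D_def by (rule bdd_belowI[of _ 0]) auto
  have dle: "d \<le> norm (u - k)" if "k \<in> Ks" for k
    unfolding d_def D_def by (rule cInf_lower) (use that Dbd D_def in auto)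
  have d0: "0 \<le> d" unfolding d_def by (rule cInf_greatest[OF Dne]) (auto simp: D_def)
  have "\<exists>k\<in>Ks. norm (u - k) < d + 1 / (real n + 1)" for n
  proof -
    have "Inf D < d + 1 / (real n + 1)" unfolding d_def by simp
    then obtain t where "t \<in> D" "t < d + 1 / (real n + 1)"
      using cInf_lessD[OF Dne] by blast
    then show ?thesis unfolding D_def by auto
  qed
  then obtain k where kK: "\<And>n. k n \<in> Ks" and kd: "\<And>n. norm (u - k n) < d + 1 / (real n + 1)"
    by metis
  have Ks_add: "a + b \<in> Ks" if "a \<in> Ks" "b \<in> Ks" for a b using that by (simp add: Ks_def add)
  have Ks_sc: "scaleC c a \<in> Ks" if "a \<in> Ks" for a c using that by (simp add: Ks_def sc)
  have Ks_scR: "r *\<^sub>R a \<in> Ks" if "a \<in> Ks" for a r using Ks_sc[OF that] by (simp add: scaleR_scaleC)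
  have cauchy_bd: "(norm (k m - k n))\<^sup>2 \<le> (4 * d + 2) * (1 / (real m + 1) + 1 / (real n + 1))" for m n
  proof -
    define em where "em = 1 / (real m + 1)"
    define en where "en = 1 / (real n + 1)"
    have em: "0 < em" "em \<le> 1" by (auto simp: em_def field_simps)
    have en: "0 < en" "en \<le> 1" by (auto simp: en_def field_simps)
    have mid: "(1/2) *\<^sub>R (k m + k n) \<in> Ks" by (intro Ks_scR Ks_add kK)
    have eq: "(u - k n) + (u - k m) = 2 *\<^sub>R (u - (1/2) *\<^sub>R (k m + k n))"
      by (simp add: scaleR_add_right scaleR_diff_right scaleR_2 algebra_simps)
    have "2 * d \<le> 2 * norm (u - (1/2) *\<^sub>R (k m + k n))" using dle[OF mid] by simp
    also have "\<dots> = norm ((u - k n) + (u - k m))" by (simp add: eq)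
    finally have lo: "2 * d \<le> norm ((u - k n) + (u - k m))" .
    have "(norm (k m - k n))\<^sup>2 = (norm ((u - k n) - (u - k m)))\<^sup>2" by (simp add: algebra_simps)
    also have "\<dots> = 2 * (norm (u - k n))\<^sup>2 + 2 * (norm (u - k m))\<^sup>2 - (norm ((u - k n) + (u - k m)))\<^sup>2"
      by (rule parallelogram)
    also have "\<dots> \<le> 2 * (d + en)\<^sup>2 + 2 * (d + em)\<^sup>2 - (2 * d)\<^sup>2"
    proof -
      have a: "(norm (u - k n))\<^sup>2 \<le> (d + en)\<^sup>2"
        using kd[of n] by (intro power_mono) (auto simp: en_def)
      have b: "(norm (u - k m))\<^sup>2 \<le> (d + em)\<^sup>2"
        using kd[of m] by (intro power_mono) (auto simp: em_def)
      have c: "(2 * d)\<^sup>2 \<le> (norm ((u - k n) + (u - k m)))\<^sup>2"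
        using lo d0 by (intro power_mono) auto
      show ?thesis using a b c by linarith
    qed
    also have "\<dots> = 4 * d * en + 2 * en * en + 4 * d * em + 2 * em * em"
      by (simp add: power2_eq_square algebra_simps)
    also have "\<dots> \<le> 4 * d * en + 2 * en + 4 * d * em + 2 * em"
    proof -
      have "en * en \<le> en" using mult_left_le[OF en(2), of en] en by simp
      moreover have "em * em \<le> em" using mult_left_le[OF em(2), of em] em by simp
      ultimately show ?thesis by linarith
    qed
    also have "\<dots> = (4 * d + 2) * (em + en)" by (simp add: algebra_simps)
    finally show ?thesis by (simp add: em_def en_def)
  qed
  have "Cauchy k"
  proof (rule CauchyI)
    fix e :: real assume e: "0 < e"
    obtain N :: nat where N: "(4 * d + 2) * 2 / (e * e) < real N"
      using reals_Archimedean2 by blast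
    have "0 < (4 * d + 2) * 2 / (e * e)" using d0 e by simp
    then have Npos: "0 < real N" using N by linarith
    show "\<exists>M. \<forall>m\<ge>M. \<forall>n\<ge>M. norm (k m - k n) < e"
    proof (intro exI allI impI)
      fix m n assume mN: "N \<le> m" and nN: "N \<le> n"
      have "1 / (real m + 1) \<le> 1 / real N" using mN Npos by (simp add: frac_le)
      moreover have "1 / (real n + 1) \<le> 1 / real N" using nN Npos by (simp add: frac_le)
      ultimately have "(norm (k m - k n))\<^sup>2 \<le> (4 * d + 2) * (2 / real N)"
      proof -
        have "(4 * d + 2) * (1 / (real m + 1) + 1 / (real n + 1)) \<le> (4 * d + 2) * (2 / real N)"
          by (rule mult_left_mono) (use \<open>1 / (real m + 1) \<le> 1 / real N\<close> \<open>1 / (real n + 1) \<le> 1 / real N\<close> d0 in auto)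
        then show ?thesis using cauchy_bd[of m n] by linarith
      qed
      also have "\<dots> < e * e"
        using N Npos e by (simp add: field_simps)
      finally have "(norm (k m - k n))\<^sup>2 < e\<^sup>2" by (simp add: power2_eq_square)
      then show "norm (k m - k n) < e" using e by (simp add: power_less_imp_less_base)
    qed
  qed
  then obtain k0 where lim: "k \<longlonglongrightarrow> k0" using Cauchy_convergent_iff convergent_def by blast
  have l1: "(\<lambda>n. \<phi> (k n)) \<longlonglongrightarrow> \<phi> k0" using phi.tendsto[OF lim] .
  have "(\<lambda>n. \<phi> (k n)) = (\<lambda>n. 0)" using kK by (auto simp: Ks_def)
  with l1 have "(\<lambda>n. 0) \<longlonglongrightarrow> \<phi> k0" by simp
  then have "\<phi> k0 = 0" using LIMSEQ_unique[OF _ tendsto_const] by blast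
  then have k0K: "k0 \<in> Ks" by (simp add: Ks_def)
  define w where "w = u - k0"
  have wle: "norm w \<le> d"
  proof (rule field_le_epsilon)
    fix e :: real assume e: "0 < e"
    obtain n1 where n1: "\<And>n. n \<ge> n1 \<Longrightarrow> norm (k n - k0) < e / 2"
      using lim e unfolding LIMSEQ_iff by (meson half_gt_zero)
    obtain n2 :: nat where n2: "2 / e < real n2" using reals_Archimedean2 by blast
    define n where "n = max n1 n2"
    have "1 / (real n + 1) < e / 2"
    proof -
      have "2 / e < real n + 1" using n2 by (simp add: n_def)
      then show ?thesis using e by (simp add: field_simps)
    qed
    moreover have "norm w \<le> norm (u - k n) + norm (k n - k0)"
      unfolding w_def using norm_triangle_ineq[of "u - k n" "k n - k0"] by simp
    ultimately show "norm w \<le> d + e" using kd[of n] n1[of n] by (simp add: n_def)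
  qed
  have minw: "(norm w)\<^sup>2 \<le> (norm (w - scaleC t k1))\<^sup>2" if "k1 \<in> Ks" for k1 t
  proof -
    have "k0 + scaleC t k1 \<in> Ks" by (intro Ks_add Ks_sc k0K that)
    then have "d \<le> norm (u - (k0 + scaleC t k1))" by (rule dle)
    then have "norm w \<le> norm (w - scaleC t k1)" using wle by (simp add: w_def algebra_simps)
    then show ?thesis by (intro power_mono) auto
  qed
  have orth: "cinner w k1 = 0" if "k1 \<in> Ks" for k1
  proof -
    define b where "b = cinner w k1"
    have "(cmod b)\<^sup>2 \<le> 0 * (norm k1)\<^sup>2"
    proof (rule quad_nonneg_aux)
      fix s :: real
      have "(norm (w - scaleC (complex_of_real s * cnj b) k1))\<^sup>2 =
            (norm w)\<^sup>2 + (cmod (complex_of_real s * cnj b) * norm k1)\<^sup>2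
             - 2 * Re (complex_of_real s * cnj b * b)"
        by (simp add: norm_diff_sq norm_scaleC cinner_scaleC_right b_def mult.assoc)
      also have "Re (complex_of_real s * cnj b * b) = s * (cmod b)\<^sup>2"
        using cmod_power2[of b] by (simp add: power2_eq_square algebra_simps)
      also have "(cmod (complex_of_real s * cnj b) * norm k1)\<^sup>2 = s\<^sup>2 * (cmod b)\<^sup>2 * (norm k1)\<^sup>2"
        by (simp add: norm_mult power_mult_distrib)
      finally show "0 \<le> 0 - 2 * s * (cmod b)\<^sup>2 + s\<^sup>2 * (cmod b)\<^sup>2 * (norm k1)\<^sup>2"
        using minw[OF that, of "complex_of_real s * cnj b"] by simp
    qed auto
    then show ?thesis by (simp add: b_def)
  qed
  have wne: "w \<noteq> 0"
  proof
    assume "w = 0" then have "u = k0" by (simp add: w_def)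
    then show False using k0K u1 by (simp add: Ks_def)
  qed
  have wu: "cinner w u = complex_of_real ((norm w)\<^sup>2)"
  proof -
    have "cinner w u = cinner w w + cinner w k0" by (simp add: w_def cinner_diff_right)
    then show ?thesis using orth[OF k0K] by (simp add: cinner_self)
  qed
  show ?thesis
  proof (intro exI allI)
    fix x
    have "x - scaleC (\<phi> x) u \<in> Ks" by (simp add: Ks_def phidiff sc u1)
    then have "cinner w (x - scaleC (\<phi> x) u) = 0" by (rule orth)
    then have "cinner w x = \<phi> x * cinner w u"
      by (simp add: cinner_diff_right cinner_scaleC_right)
    then have "cinner w x = \<phi> x * complex_of_real ((norm w)\<^sup>2)" by (simp add: wu)
    then have "\<phi> x = cinner w x / complex_of_real ((norm w)\<^sup>2)" using wne by simp
    then show "\<phi> x = cinner (scaleC (complex_of_real (1 / (norm w)\<^sup>2)) w) x"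
      by (simp add: cinner_scaleC_left divide_inverse mult.commute)
  qed
qed

section \<open>Adjoint\<close>

lemma adj_exists:
  fixes T :: "'a::chilbert \<Rightarrow> 'a"
  assumes T: "bop T"
  shows "\<exists>S. \<forall>x y. cinner (T x) y = cinner x (S y)"
proof -
  have "\<exists>z. \<forall>x. cinner (T x) y = cinner x z" for y
  proof -
    have "\<exists>z. \<forall>x. cinner y (T x) = cinner z x"
    proof (rule riesz[where K = "norm y * onorm T"])
      show "cinner y (T (x + x')) = cinner y (T x) + cinner y (T x')" for x x'
        by (simp add: bop_add[OF T] cinner_add_right)
      show "cinner y (T (scaleC c x)) = c * cinner y (T x)" for c x
        by (simp add: bop_scaleC[OF T] cinner_scaleC_right)
      show "cmod (cinner y (T x)) \<le> norm y * onorm T * norm x" for x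
        using cinner_cs[of y "T x"] mult_left_mono[OF bop_norm[OF T, of x] norm_ge_zero[of y]]
        by (simp add: mult.assoc)
    qed
    then obtain z where "\<forall>x. cinner y (T x) = cinner z x" by blast
    then have "\<forall>x. cinner (T x) y = cinner x z" by (metis cinner_commute)
    then show ?thesis by blast
  qed
  then show ?thesis by metis
qed

lemma adj_prop:
  fixes T :: "'a::chilbert \<Rightarrow> 'a"
  assumes T: "bop T"
  shows "cinner (T x) y = cinner x (adj T y)"
proof -
  have ex1: "\<exists>!S. \<forall>x y. cinner (T x) y = cinner x (S y)"
  proof -
    obtain S where S: "\<forall>x y. cinner (T x) y = cinner x (S y)" using adj_exists[OF T] by blast
    moreover have "S' = S" if "\<forall>x y. cinner (T x) y = cinner x (S' y)" for S'
    proof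
      fix y show "S' y = S y" by (rule cinner_ext) (use that S in metis)
    qed
    ultimately show ?thesis by blast
  qed
  show ?thesis unfolding adj_def using theI'[OF ex1] by blast
qed

lemma adj_prop2:
  fixes T :: "'a::chilbert \<Rightarrow> 'a"
  assumes T: "bop T"
  shows "cinner (adj T x) y = cinner x (T y)"
proof -
  have "cinner (adj T x) y = cnj (cinner y (adj T x))" by (rule cinner_commute)
  also have "\<dots> = cnj (cinner (T y) x)" by (simp add: adj_prop[OF T])
  also have "\<dots> = cinner x (T y)" by (simp add: cinner_cnj_sym)
  finally show ?thesis .
qed

lemma adj_norm:
  fixes T :: "'a::chilbert \<Rightarrow> 'a"
  assumes T: "bop T"
  shows "norm (adj T y) \<le> onorm T * norm y"
proof -
  have "(norm (adj T y))\<^sup>2 = Re (cinner (adj T y) (adj T y))" by (simp add: Re_cinner_self)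
  also have "\<dots> = Re (cinner (T (adj T y)) y)" by (simp add: adj_prop[OF T])
  also have "\<dots> \<le> norm (T (adj T y)) * norm y" by (rule Re_cinner_le)
  also have "\<dots> \<le> onorm T * norm (adj T y) * norm y"
    by (rule mult_right_mono[OF bop_norm[OF T]]) simp
  finally have *: "norm (adj T y) * norm (adj T y) \<le> (onorm T * norm y) * norm (adj T y)"
    by (simp add: power2_eq_square mult_ac)
  show ?thesis
  proof (cases "norm (adj T y) = 0")
    case True then show ?thesis using bop_onorm_nonneg[OF T] by simp
  next
    case False then have "0 < norm (adj T y)" by simp
    with * show ?thesis using mult_le_cancel_right_pos by blast
  qed
qed

lemma adj_bop:
  fixes T :: "'a::chilbert \<Rightarrow> 'a"
  assumes T: "bop T"
  shows "bop (adj T)"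
proof (rule bopI[where K = "onorm T"])
  show "adj T (x + y) = adj T x + adj T y" for x y
    by (rule cinner_ext) (simp add: adj_prop[OF T, symmetric] cinner_add_right)
  show "adj T (scaleC c x) = scaleC c (adj T x)" for c x
    by (rule cinner_ext) (simp add: adj_prop[OF T, symmetric] cinner_scaleC_right)
  show "norm (adj T y) \<le> onorm T * norm y" for y by (rule adj_norm[OF T])
qed

lemma adj_adj:
  fixes T :: "'a::chilbert \<Rightarrow> 'a"
  assumes T: "bop T"
  shows "adj (adj T) = T"
proof
  fix y
  show "adj (adj T) y = T y"
    by (rule cinner_ext) (simp add: adj_prop[OF adj_bop[OF T], symmetric] adj_prop2[OF T])
qed




section \<open>Polynomials of operators\<close>

lemma poly_op_upto:
  assumes "degree p \<le> N"
  shows "poly_op p T x = (\<Sum>i\<le>N. coeff p i *\<^sub>R (T ^^ i) x)"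
  unfolding poly_op_def
  by (rule sum.mono_neutral_left) (use assms in \<open>auto simp: coeff_eq_0\<close>)

lemma poly_op_zero [simp]: "poly_op 0 T x = 0"
  by (simp add: poly_op_def)

lemma poly_op_pCons:
  assumes T: "bop T"
  shows "poly_op (pCons c p) T x = c *\<^sub>R x + T (poly_op p T x)"
proof -
  have "poly_op (pCons c p) T x = (\<Sum>i\<le>Suc (degree p). coeff (pCons c p) i *\<^sub>R (T ^^ i) x)"
    by (rule poly_op_upto) (simp add: degree_pCons_le)
  also have "\<dots> = c *\<^sub>R x + (\<Sum>i\<le>degree p. coeff p i *\<^sub>R (T ^^ Suc i) x)"
    unfolding sum.atMost_Suc_shift by simp
  also have "(\<Sum>i\<le>degree p. coeff p i *\<^sub>R (T ^^ Suc i) x) = T (poly_op p T x)"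
    by (simp add: poly_op_def bop_sum[OF T] bop_scaleR[OF T])
  finally show ?thesis .
qed

lemma poly_op_add: "poly_op (p + q) T x = poly_op p T x + poly_op q T x"
proof -
  define N where "N = degree p + degree q"
  have "poly_op (p + q) T x = (\<Sum>i\<le>N. coeff (p + q) i *\<^sub>R (T ^^ i) x)"
    by (rule poly_op_upto) (simp add: N_def degree_add_le)
  also have "\<dots> = (\<Sum>i\<le>N. coeff p i *\<^sub>R (T ^^ i) x) + (\<Sum>i\<le>N. coeff q i *\<^sub>R (T ^^ i) x)"
    by (simp add: scaleR_add_left sum.distrib)
  also have "\<dots> = poly_op p T x + poly_op q T x"
    using poly_op_upto[of p N T x] poly_op_upto[of q N T x] by (simp add: N_def)
  finally show ?thesis .
qed

lemma poly_op_smult: "poly_op (smult c p) T x = c *\<^sub>R poly_op p T x"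
proof -
  have "poly_op (smult c p) T x = (\<Sum>i\<le>degree p. coeff (smult c p) i *\<^sub>R (T ^^ i) x)"
    by (rule poly_op_upto) (rule degree_smult_le)
  also have "\<dots> = c *\<^sub>R poly_op p T x"
    by (simp add: poly_op_def scaleR_sum_right)
  finally show ?thesis .
qed

lemma poly_op_minus: "poly_op (- p) T x = - poly_op p T x"
  using poly_op_smult[of "-1" p T x] by simp

lemma poly_op_diff: "poly_op (p - q) T x = poly_op p T x - poly_op q T x"
  using poly_op_add[of p "- q" T x] poly_op_minus[of q T x] by simp

lemma poly_op_const: "poly_op [:c:] T x = c *\<^sub>R x"
  by (simp add: poly_op_def)

lemma poly_op_X: "bop T \<Longrightarrow> poly_op [:0, 1:] T x = T x"
  by (simp add: poly_op_pCons poly_op_const)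

lemma poly_op_bop:
  assumes T: "bop T"
  shows "bop (poly_op p T)"
proof (induction p)
  case 0
  have "poly_op 0 T = (\<lambda>x. 0 *\<^sub>R x)" by (rule ext) simp
  then show ?case using bop_const[of 0] by simp
next
  case (pCons a p)
  have "poly_op (pCons a p) T = (\<lambda>x. a *\<^sub>R x + T (poly_op p T x))"
    by (rule ext) (simp add: poly_op_pCons[OF T])
  moreover have "bop (\<lambda>x. a *\<^sub>R x + T (poly_op p T x))"
    by (rule bop_plus[OF bop_const bop_comp[OF T pCons.IH]])
  ultimately show ?case by simp
qed

lemma poly_op_mult:
  assumes T: "bop T"
  shows "poly_op (p * q) T x = poly_op p T (poly_op q T x)"
proof (induction p)
  case 0 then show ?case by simp
next
  case (pCons a p)
  have "poly_op (pCons a p * q) T x = poly_op (smult a q + pCons 0 (p * q)) T x"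
    by (simp only: mult_pCons_left)
  also have "\<dots> = a *\<^sub>R poly_op q T x + (0 *\<^sub>R x + T (poly_op (p * q) T x))"
    by (simp only: poly_op_add poly_op_smult poly_op_pCons[OF T])
  also have "\<dots> = poly_op (pCons a p) T (poly_op q T x)"
    by (simp add: poly_op_pCons[OF T] pCons.IH)
  finally show ?case .
qed

lemma poly_op_comm:
  assumes T: "bop T"
  shows "poly_op p T (T x) = T (poly_op p T x)"
proof -
  have "poly_op p T (T x) = poly_op p T (poly_op [:0,1:] T x)" by (simp add: poly_op_X[OF T])
  also have "\<dots> = poly_op (p * [:0,1:]) T x" by (simp only: poly_op_mult[OF T])
  also have "\<dots> = poly_op ([:0,1:] * p) T x" by (simp only: mult.commute)
  also have "\<dots> = poly_op [:0,1:] T (poly_op p T x)" by (simp only: poly_op_mult[OF T])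
  also have "\<dots> = T (poly_op p T x)" by (simp only: poly_op_X[OF T])
  finally show ?thesis .
qed

lemma poly_op_comm2:
  assumes T: "bop T"
  shows "poly_op p T (poly_op q T x) = poly_op q T (poly_op p T x)"
proof -
  have "poly_op p T (poly_op q T x) = poly_op (p * q) T x" by (simp only: poly_op_mult[OF T])
  also have "\<dots> = poly_op (q * p) T x" by (simp only: mult.commute)
  finally show ?thesis by (simp only: poly_op_mult[OF T])
qed

lemma poly_op_herm:
  assumes T: "bop T" and H: "herm T"
  shows "herm (poly_op p T)"
proof (induction p)
  case 0 then show ?case by (simp add: herm_def)
next
  case (pCons a p)
  show ?case unfolding herm_def
  proof (intro allI)
    fix x y
    have "cinner x (T (poly_op p T y)) = cinner (T x) (poly_op p T y)" by (rule hermD[OF H])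
    also have "\<dots> = cinner (poly_op p T (T x)) y" by (rule hermD[OF pCons.IH])
    also have "\<dots> = cinner (T (poly_op p T x)) y" by (simp add: poly_op_comm[OF T])
    finally show "cinner x (poly_op (pCons a p) T y) = cinner (poly_op (pCons a p) T x) y"
      by (simp add: poly_op_pCons[OF T] cinner_add_left cinner_add_right cinner_scaleR_left cinner_scaleR_right)
  qed
qed

definition poly_opC :: "complex poly \<Rightarrow> ('a::complex_inner \<Rightarrow> 'a) \<Rightarrow> 'a \<Rightarrow> 'a" where
  "poly_opC p T = (\<lambda>x. \<Sum>i\<le>degree p. scaleC (coeff p i) ((T ^^ i) x))"

lemma scaleC_sum: "scaleC c (sum f A) = (\<Sum>i\<in>A. scaleC c (f i :: 'a::complex_inner))"
  by (induction A rule: infinite_finite_induct) (auto simp: scaleC_add_right)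

lemma bop_funpow_scaleC: "bop T \<Longrightarrow> (T ^^ i) (scaleC c x) = scaleC c ((T ^^ i) x)"
  by (induction i) (auto simp: bop_scaleC)

lemma poly_opC_upto:
  assumes "degree p \<le> N"
  shows "poly_opC p T x = (\<Sum>i\<le>N. scaleC (coeff p i) ((T ^^ i) x))"
  unfolding poly_opC_def
  by (rule sum.mono_neutral_left) (use assms in \<open>auto simp: coeff_eq_0\<close>)

lemma poly_opC_zero [simp]: "poly_opC 0 T x = 0"
  by (simp add: poly_opC_def)

lemma poly_opC_pCons:
  assumes T: "bop T"
  shows "poly_opC (pCons c p) T x = scaleC c x + T (poly_opC p T x)"
proof -
  have "poly_opC (pCons c p) T x = (\<Sum>i\<le>Suc (degree p). scaleC (coeff (pCons c p) i) ((T ^^ i) x))"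
    by (rule poly_opC_upto) (simp add: degree_pCons_le)
  also have "\<dots> = scaleC c x + (\<Sum>i\<le>degree p. scaleC (coeff p i) ((T ^^ Suc i) x))"
    unfolding sum.atMost_Suc_shift by simp
  also have "(\<Sum>i\<le>degree p. scaleC (coeff p i) ((T ^^ Suc i) x)) = T (poly_opC p T x)"
    by (simp add: poly_opC_def bop_sum[OF T] bop_scaleC[OF T])
  finally show ?thesis .
qed

lemma poly_opC_add: "poly_opC (p + q) T x = poly_opC p T x + poly_opC q T x"
proof -
  define N where "N = degree p + degree q"
  have "poly_opC (p + q) T x = (\<Sum>i\<le>N. scaleC (coeff (p + q) i) ((T ^^ i) x))"
    by (rule poly_opC_upto) (simp add: N_def degree_add_le)
  also have "\<dots> = (\<Sum>i\<le>N. scaleC (coeff p i) ((T ^^ i) x)) + (\<Sum>i\<le>N. scaleC (coeff q i) ((T ^^ i) x))"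
    by (simp add: scaleC_add_left sum.distrib)
  also have "\<dots> = poly_opC p T x + poly_opC q T x"
    using poly_opC_upto[of p N T x] poly_opC_upto[of q N T x] by (simp add: N_def)
  finally show ?thesis .
qed

lemma poly_opC_smult: "poly_opC (smult c p) T x = scaleC c (poly_opC p T x)"
proof -
  have "poly_opC (smult c p) T x = (\<Sum>i\<le>degree p. scaleC (coeff (smult c p) i) ((T ^^ i) x))"
    by (rule poly_opC_upto) (rule degree_smult_le)
  also have "\<dots> = scaleC c (poly_opC p T x)"
    by (simp add: poly_opC_def scaleC_sum scaleC_scaleC)
  finally show ?thesis .
qed

lemma poly_opC_mult:
  assumes T: "bop T"
  shows "poly_opC (p * q) T x = poly_opC p T (poly_opC q T x)"
proof (induction p)
  case 0 then show ?case by simp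
next
  case (pCons a p)
  have "poly_opC (pCons a p * q) T x = poly_opC (smult a q + pCons 0 (p * q)) T x"
    by (simp only: mult_pCons_left)
  also have "\<dots> = scaleC a (poly_opC q T x) + (scaleC 0 x + T (poly_opC (p * q) T x))"
    by (simp only: poly_opC_add poly_opC_smult poly_opC_pCons[OF T])
  also have "\<dots> = poly_opC (pCons a p) T (poly_opC q T x)"
    by (simp add: poly_opC_pCons[OF T] pCons.IH)
  finally show ?case .
qed

lemma poly_opC_of_real: "poly_opC (map_poly complex_of_real p) T x = poly_op p T x"
proof -
  have "poly_opC (map_poly complex_of_real p) T x =
      (\<Sum>i\<le>degree p. scaleC (coeff (map_poly complex_of_real p) i) ((T ^^ i) x))"
    by (rule poly_opC_upto) (simp add: degree_map_poly)
  also have "\<dots> = poly_op p T x"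
    by (simp add: poly_op_def coeff_map_poly scaleC_of_real)
  finally show ?thesis .
qed




section \<open>Bounded below operators\<close>

definition bbelow :: "('a::complex_inner \<Rightarrow> 'a) \<Rightarrow> real \<Rightarrow> bool" where
  "bbelow T d \<longleftrightarrow> 0 < d \<and> (\<forall>x. d * norm x \<le> norm (T x))"

lemma bbelow_comp:
  assumes "bbelow T a" "bbelow S b"
  shows "bbelow (\<lambda>x. T (S x)) (a * b)"
  unfolding bbelow_def
proof (intro conjI allI)
  show "0 < a * b" using assms by (simp add: bbelow_def)
  fix x
  have "a * (b * norm x) \<le> a * norm (S x)"
    using assms by (intro mult_left_mono) (auto simp: bbelow_def)
  also have "\<dots> \<le> norm (T (S x))" using assms by (simp add: bbelow_def)
  finally show "a * b * norm x \<le> norm (T (S x))" by (simp add: mult.assoc)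
qed

lemma bb_from_inner:
  assumes "0 < d" and "d * (norm x)\<^sup>2 \<le> Re (cinner x w)"
  shows "d * norm x \<le> norm (w::'a::complex_inner)"
proof (cases "x = 0")
  case True then show ?thesis by simp
next
  case False
  have "d * norm x * norm x \<le> norm w * norm x"
    using assms(2) Re_cinner_le[of x w] by (simp add: power2_eq_square mult_ac)
  then show ?thesis using False by (simp add: mult_le_cancel_right)
qed

lemma herm_cinner_Re: "herm T \<Longrightarrow> cinner (T x) x = complex_of_real (Re (cinner x (T x)))"
  by (metis hermD herm_cinner_real)

lemma lin_factor_bbelow:
  fixes T :: "'a::complex_inner \<Rightarrow> 'a"
  assumes P: "pos_op T" and Ta: "onorm T \<le> a"
    and r: "\<not> (Im r = 0 \<and> 0 \<le> Re r \<and> Re r \<le> a)"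
  shows "\<exists>d. bbelow (\<lambda>x. scaleC (- r) x + T x) d"
proof -
  have B: "bop T" using P by (rule pos_op_bop)
  have H: "herm T" using P by (rule pos_herm)
  show ?thesis
  proof (cases "Im r = 0")
    case False
    define d where "d = \<bar>Im r\<bar>"
    have "bbelow (\<lambda>x. scaleC (- r) x + T x) d"
      unfolding bbelow_def
    proof (intro conjI allI)
      show "0 < d" using False by (simp add: d_def)
      fix x
      define v where "v = T x - Re r *\<^sub>R x"
      define y where "y = scaleC (\<i> * complex_of_real (Im r)) x"
      have eq: "scaleC (- r) x + T x = v - y"
      proof -
        have "scaleC r x = scaleC (complex_of_real (Re r)) x + y"
          unfolding y_def by (subst complex_eq[of r]) (rule scaleC_add_left)
        then have h: "scaleC (- r) x = - (Re r *\<^sub>R x) - y"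
          by (simp add: scaleC_minus_left scaleC_of_real)
        have "scaleC (- r) x + T x = (- (Re r *\<^sub>R x) - y) + T x" by (simp only: h)
        also have "\<dots> = v - y" by (simp add: v_def algebra_simps)
        finally show ?thesis .
      qed
      have vx: "cinner v x = complex_of_real (Re (cinner x (T x)) - Re r * (norm x)\<^sup>2)"
        by (simp add: v_def cinner_diff_left cinner_scaleR_left herm_cinner_Re[OF H] cinner_self)
      have "Re (cinner v y) = 0"
        by (simp add: y_def cinner_scaleC_right vx)
      then have "(norm (v - y))\<^sup>2 = (norm v)\<^sup>2 + (norm y)\<^sup>2" by (simp add: norm_diff_sq)
      then have "(norm y)\<^sup>2 \<le> (norm (v - y))\<^sup>2" by simp
      then have "norm y \<le> norm (v - y)" by (rule power2_le_imp_le) simp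
      moreover have "norm y = d * norm x" by (simp add: y_def norm_scaleC norm_mult d_def)
      ultimately show "d * norm x \<le> norm (scaleC (- r) x + T x)" by (simp add: eq)
    qed
    then show ?thesis by blast
  next
    case True
    have rr: "r = complex_of_real (Re r)" using True by (simp add: complex_eq_iff)
    have sc: "scaleC (- r) x = (- Re r) *\<^sub>R x" for x
      by (subst rr) (simp add: scaleC_of_real[symmetric])
    have up: "Re (cinner x (T x)) \<le> a * (norm x)\<^sup>2" for x
    proof -
      have "Re (cinner x (T x)) \<le> norm x * norm (T x)" by (rule Re_cinner_le)
      also have "\<dots> \<le> norm x * (onorm T * norm x)" by (rule mult_left_mono[OF bop_norm[OF B]]) simp
      also have "\<dots> \<le> norm x * (a * norm x)" by (intro mult_left_mono mult_right_mono Ta) simp_all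
      finally show ?thesis by (simp add: power2_eq_square mult_ac)
    qed
    show ?thesis
    proof (cases "Re r < 0")
      case True
      have "bbelow (\<lambda>x. scaleC (- r) x + T x) (- Re r)"
        unfolding bbelow_def
      proof (intro conjI allI)
        show "0 < - Re r" using True by simp
        fix x
        show "- Re r * norm x \<le> norm (scaleC (- r) x + T x)"
        proof (rule bb_from_inner)
          show "0 < - Re r" using True by simp
          show "- Re r * (norm x)\<^sup>2 \<le> Re (cinner x (scaleC (- r) x + T x))"
            using pos_opD[OF P, of x] by (simp add: sc cinner_add_right cinner_diff_right cinner_scaleR_right Re_cinner_self)
        qed
      qed
      then show ?thesis by blast
    next
      case False
      then have ra: "a < Re r" using r \<open>Im r = 0\<close> by auto
      have "bbelow (\<lambda>x. scaleC (- r) x + T x) (Re r - a)"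
        unfolding bbelow_def
      proof (intro conjI allI)
        show "0 < Re r - a" using ra by simp
        fix x
        have "(Re r - a) * norm x \<le> norm (- (scaleC (- r) x + T x))"
        proof (rule bb_from_inner)
          show "0 < Re r - a" using ra by simp
          show "(Re r - a) * (norm x)\<^sup>2 \<le> Re (cinner x (- (scaleC (- r) x + T x)))"
            using up[of x] by (simp add: sc cinner_minus_right cinner_add_right cinner_diff_right cinner_scaleR_right Re_cinner_self algebra_simps)
        qed
        then show "(Re r - a) * norm x \<le> norm (scaleC (- r) x + T x)" by (simp only: norm_minus_cancel)
      qed
      then show ?thesis by blast
    qed
  qed
qed

lemma poly_opC_lin:
  assumes B: "bop T" shows "poly_opC [:- z, 1:] T x = scaleC (- z) x + T x"
  by (simp add: poly_opC_pCons[OF B] scaleC_one bop_zero[OF B])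

lemma poly_bbelow:
  fixes T :: "'a::complex_inner \<Rightarrow> 'a"
  assumes P: "pos_op T" and Ta: "onorm T \<le> a"
  shows "q \<noteq> 0 \<Longrightarrow> (\<And>z. poly q z = 0 \<Longrightarrow> \<not> (Im z = 0 \<and> 0 \<le> Re z \<and> Re z \<le> a))
          \<Longrightarrow> \<exists>d. bbelow (poly_opC q T) d"
proof (induction "degree q" arbitrary: q rule: less_induct)
  case less
  have B: "bop T" using P by (rule pos_op_bop)
  show ?case
  proof (cases "degree q = 0")
    case True
    define c where "c = coeff q 0"
    have qc: "q = [:c:]" using degree_0_id[OF True] by (simp add: c_def)
    have c0: "c \<noteq> 0" using less.prems(1) qc by simp
    have "bbelow (poly_opC q T) (cmod c)"
      unfolding bbelow_def using c0 by (simp add: qc poly_opC_def norm_scaleC)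
    then show ?thesis by blast
  next
    case False
    then have "\<not> constant (poly q)" by (simp add: constant_degree)
    then obtain z where z: "poly q z = 0" using fundamental_theorem_of_algebra by blast
    then have "[:- z, 1:] dvd q" by (simp add: poly_eq_0_iff_dvd)
    then obtain q' where q': "q = [:- z, 1:] * q'" by (rule dvdE)
    have q'0: "q' \<noteq> 0" using less.prems(1) q' by auto
    have "degree q = degree [:- z, 1:] + degree q'"
      unfolding q' by (rule degree_mult_eq) (simp_all add: q'0)
    then have dq: "degree q = Suc (degree q')" by simp
    have "\<exists>d. bbelow (poly_opC q' T) d"
    proof (rule less.hyps)
      show "degree q' < degree q" using dq by simp
      show "q' \<noteq> 0" by (rule q'0)
      fix w assume "poly q' w = 0"
      then have "poly q w = 0" by (simp add: q')
      then show "\<not> (Im w = 0 \<and> 0 \<le> Re w \<and> Re w \<le> a)" by (rule less.prems(2))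
    qed
    then obtain d2 where d2: "bbelow (poly_opC q' T) d2" by blast
    obtain d1 where d1: "bbelow (\<lambda>x. scaleC (- z) x + T x) d1"
      using lin_factor_bbelow[OF P Ta less.prems(2)[OF z]] by blast
    have "bbelow (\<lambda>x. scaleC (- z) (poly_opC q' T x) + T (poly_opC q' T x)) (d1 * d2)"
      using bbelow_comp[OF d1 d2] by simp
    moreover have "poly_opC q T = (\<lambda>x. scaleC (- z) (poly_opC q' T x) + T (poly_opC q' T x))"
      by (rule ext) (simp only: q' poly_opC_mult[OF B] poly_opC_lin[OF B])
    ultimately show ?thesis by auto
  qed
qed

section \<open>Approximate eigenvectors at the bottom of the numerical range\<close>

lemma Re_form_scaleR:
  assumes "bop D"
  shows "Re (cinner (c *\<^sub>R x) (D (c *\<^sub>R x))) = c\<^sup>2 * Re (cinner x (D x))"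
  by (simp add: bop_scaleR[OF assms] cinner_scaleR_left cinner_scaleR_right power2_eq_square)

lemma approx_inf:
  fixes D :: "'a::complex_inner \<Rightarrow> 'a"
  assumes B: "bop D" and H: "herm D" and z: "Re (cinner z (D z)) < 0"
  shows "\<exists>m<0. \<forall>e>0. \<exists>x. norm x = 1 \<and> norm (D x - m *\<^sub>R x) < e"
proof -
  define R where "R = (\<lambda>x. Re (cinner x (D x))) ` {x. norm x = 1}"
  define m where "m = Inf R"
  have z0: "z \<noteq> 0" using z by auto
  define u where "u = (1 / norm z) *\<^sub>R z"
  have u1: "norm u = 1" using z0 by (simp add: u_def)
  have uval: "Re (cinner u (D u)) = (1 / norm z)\<^sup>2 * Re (cinner z (D z))"
    unfolding u_def by (rule Re_form_scaleR[OF B])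
  have uneg: "Re (cinner u (D u)) < 0" using uval z z0 by (simp add: mult_pos_neg)
  have Rne: "R \<noteq> {}" using u1 by (auto simp: R_def)
  have Rbd: "bdd_below R"
  proof (rule bdd_belowI[of _ "- onorm D"])
    fix t assume "t \<in> R"
    then obtain x where x: "norm x = 1" "t = Re (cinner x (D x))" by (auto simp: R_def)
    have "- Re (cinner x (D x)) \<le> norm x * norm (D x)"
      using Re_cinner_le[of x "- D x"] by (simp add: cinner_minus_right)
    also have "\<dots> \<le> onorm D" using bop_norm[OF B, of x] x by simp
    finally show "- onorm D \<le> t" using x by simp
  qed
  have mle: "m \<le> Re (cinner x (D x))" if "norm x = 1" for x
    unfolding m_def by (rule cInf_lower) (use that Rbd in \<open>auto simp: R_def\<close>)
  have mneg: "m < 0" using mle[OF u1] uneg by simp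
  define P where "P = (\<lambda>x. D x - m *\<^sub>R x)"
  have PB: "bop P" unfolding P_def by (rule bop_minus_op[OF B bop_const])
  have Pre: "0 \<le> Re (cinner x (P x))" for x
  proof (cases "x = 0")
    case True then show ?thesis by (simp add: P_def bop_zero[OF B])
  next
    case False
    define v where "v = (1 / norm x) *\<^sub>R x"
    have v1: "norm v = 1" using False by (simp add: v_def)
    have "Re (cinner v (D v)) = (1 / norm x)\<^sup>2 * Re (cinner x (D x))"
      unfolding v_def by (rule Re_form_scaleR[OF B])
    then have "m \<le> (1 / norm x)\<^sup>2 * Re (cinner x (D x))" using mle[OF v1] by simp
    then have "m * (norm x)\<^sup>2 \<le> Re (cinner x (D x))"
      using False by (simp add: field_simps power2_eq_square)
    then show ?thesis by (simp add: P_def cinner_diff_right cinner_scaleR_right Re_cinner_self)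
  qed
  have PP: "pos_op P"
    unfolding pos_op_def
  proof (intro conjI allI PB)
    fix x
    show "Im (cinner x (P x)) = 0"
      by (simp add: P_def cinner_diff_right cinner_scaleR_right herm_real[OF H] cinner_self)
    show "0 \<le> Re (cinner x (P x))" by (rule Pre)
  qed
  show ?thesis
  proof (intro exI[of _ m] conjI allI impI mneg)
    fix e :: real assume e: "0 < e"
    define eta where "eta = e\<^sup>2 / (onorm P + 1)"
    have op0: "0 \<le> onorm P" by (rule bop_onorm_nonneg[OF PB])
    have eta0: "0 < eta" using e op0 by (simp add: eta_def)
    have "Inf R < m + eta" using eta0 by (simp add: m_def)
    then obtain t where "t \<in> R" "t < m + eta" using cInf_lessD[OF Rne] by blast
    then obtain x where x: "norm x = 1" "Re (cinner x (D x)) < m + eta" by (auto simp: R_def)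
    have rx: "Re (cinner x (P x)) < eta"
      using x by (simp add: P_def cinner_diff_right cinner_scaleR_right Re_cinner_self)
    have "(norm (P x))\<^sup>2 \<le> onorm P * Re (cinner x (P x))" by (rule pos_form_cs[OF PP])
    also have "\<dots> \<le> onorm P * eta" using rx op0 by (intro mult_left_mono) auto
    also have "\<dots> < e\<^sup>2"
    proof -
      have "onorm P * eta = e\<^sup>2 * (onorm P / (onorm P + 1))" by (simp add: eta_def field_simps)
      also have "\<dots> < e\<^sup>2 * 1" using op0 e by (intro mult_strict_left_mono) auto
      finally show ?thesis by simp
    qed
    finally have "norm (P x) < e" using e by (simp add: power_less_imp_less_base)
    then show "\<exists>x. norm x = 1 \<and> norm (D x - m *\<^sub>R x) < e" using x(1) by (auto simp: P_def)
  qed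
qed




lemma poly_map_of_real: "poly (map_poly complex_of_real p) (complex_of_real t) = complex_of_real (poly p t)"
  by (induction p) (auto simp: map_poly_pCons)

lemma poly_pos:
  fixes T :: "'a::complex_inner \<Rightarrow> 'a"
  assumes P: "pos_op T" and Ta: "onorm T \<le> a"
    and pnn: "\<And>t. 0 \<le> t \<Longrightarrow> t \<le> a \<Longrightarrow> 0 \<le> poly p t"
  shows "pos_op (poly_op p T)"
proof -
  have B: "bop T" using P by (rule pos_op_bop)
  have H: "herm T" using P by (rule pos_herm)
  define S where "S = poly_op p T"
  have SB: "bop S" unfolding S_def by (rule poly_op_bop[OF B])
  have SH: "herm S" unfolding S_def by (rule poly_op_herm[OF B H])
  have a0: "0 \<le> a" using bop_onorm_nonneg[OF B] Ta by simp
  have "0 \<le> Re (cinner x (S x))" for x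
  proof (rule ccontr)
    assume "\<not> 0 \<le> Re (cinner x (S x))"
    then have neg: "Re (cinner x (S x)) < 0" by simp
    obtain m where m: "m < 0" and ap: "\<And>e. e > 0 \<Longrightarrow> \<exists>x. norm x = 1 \<and> norm (S x - m *\<^sub>R x) < e"
      using approx_inf[OF SB SH neg] by blast
    define q where "q = map_poly complex_of_real (p - [:m:])"
    have roots: "\<not> (Im z = 0 \<and> 0 \<le> Re z \<and> Re z \<le> a)" if "poly q z = 0" for z
    proof
      assume z: "Im z = 0 \<and> 0 \<le> Re z \<and> Re z \<le> a"
      then have "z = complex_of_real (Re z)" by (simp add: complex_eq_iff)
      then have "complex_of_real (poly (p - [:m:]) (Re z)) = 0"
        using that by (metis q_def poly_map_of_real)
      then have "poly p (Re z) = m" by simp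
      then show False using pnn[of "Re z"] z m by simp
    qed
    have q0: "q \<noteq> 0"
    proof
      assume "q = 0"
      then have "poly q 0 = 0" by simp
      then show False using roots[of 0] a0 by simp
    qed
    obtain d where d: "bbelow (poly_opC q T) d" using poly_bbelow[OF P Ta q0 roots] by blast
    have qS: "poly_opC q T y = S y - m *\<^sub>R y" for y
      by (simp add: q_def poly_opC_of_real poly_op_diff poly_op_const S_def)
    obtain y where y: "norm y = 1" "norm (S y - m *\<^sub>R y) < d" using ap d by (auto simp: bbelow_def)
    have "d * norm y \<le> norm (poly_opC q T y)" using d by (simp add: bbelow_def)
    then show False using y qS by simp
  qed
  then show ?thesis
    unfolding pos_op_def using SB herm_real[OF SH] by (simp add: S_def)
qed

lemma poly_norm_bound:
  fixes T :: "'a::complex_inner \<Rightarrow> 'a"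
  assumes P: "pos_op T" and Ta: "onorm T \<le> a"
    and pb: "\<And>t. 0 \<le> t \<Longrightarrow> t \<le> a \<Longrightarrow> \<bar>poly p t\<bar> \<le> M"
  shows "norm (poly_op p T x) \<le> M * norm x"
proof -
  have B: "bop T" using P by (rule pos_op_bop)
  have H: "herm T" using P by (rule pos_herm)
  have a0: "0 \<le> a" using bop_onorm_nonneg[OF B] Ta by simp
  have M0: "0 \<le> M" using pb[of 0] a0 by simp
  define q where "q = [:M\<^sup>2:] - p * p"
  have "pos_op (poly_op q T)"
  proof (rule poly_pos[OF P Ta])
    fix t :: real assume "0 \<le> t" "t \<le> a"
    then have pt: "\<bar>poly p t\<bar> \<le> M" by (rule pb)
    have "(poly p t)\<^sup>2 \<le> M\<^sup>2" using power_mono[OF pt abs_ge_zero, of 2] by simp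
    then show "0 \<le> poly q t" by (simp add: q_def power2_eq_square)
  qed
  then have c1: "0 \<le> Re (cinner x (poly_op q T x))" by (rule pos_opD)
  have c2: "poly_op q T x = M\<^sup>2 *\<^sub>R x - poly_op p T (poly_op p T x)"
    unfolding q_def by (simp only: poly_op_diff poly_op_const poly_op_mult[OF B])
  have c3: "cinner x (poly_op p T (poly_op p T x)) = cinner (poly_op p T x) (poly_op p T x)"
    by (rule hermD[OF poly_op_herm[OF B H]])
  have "Re (cinner x (poly_op q T x)) = M\<^sup>2 * (norm x)\<^sup>2 - (norm (poly_op p T x))\<^sup>2"
    unfolding c2 cinner_diff_right cinner_scaleR_right c3 by (simp add: Re_cinner_self)
  then have "(norm (poly_op p T x))\<^sup>2 \<le> (M * norm x)\<^sup>2"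
    using c1 by (simp add: power_mult_distrib)
  then show ?thesis by (rule power2_le_imp_le) (simp add: M0)
qed




section \<open>Continuous functional calculus\<close>

abbreviation epsn :: "nat \<Rightarrow> real" where "epsn n \<equiv> inverse (real (Suc n))"

lemma epsn_pos: "0 < epsn n" by simp

lemma epsn_lim: "epsn \<longlonglongrightarrow> 0" by (rule LIMSEQ_inverse_real_of_nat)

lemma epsn_small: "0 < e \<Longrightarrow> \<exists>N. \<forall>n\<ge>N. epsn n < e"
  using epsn_lim unfolding LIMSEQ_iff by (metis abs_of_pos epsn_pos real_norm_def diff_zero)

lemma eps_zero:
  fixes r K :: real
  assumes "\<And>n. r \<le> K * epsn n"
  shows "r \<le> 0"
proof -
  have "(\<lambda>n. K * epsn n) \<longlonglongrightarrow> K * 0" by (intro tendsto_mult tendsto_const epsn_lim)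
  then show ?thesis using assms by (intro LIMSEQ_le_const[of "\<lambda>n. K * epsn n"]) auto
qed

lemma weier_poly:
  fixes f :: "real \<Rightarrow> real"
  assumes "continuous_on {0..a} f" and "0 < e"
  shows "\<exists>r. \<forall>t\<in>{0..a}. \<bar>f t - poly r t\<bar> < e"
proof -
  obtain g where g: "real_polynomial_function g" "\<And>x. x \<in> {0..a} \<Longrightarrow> \<bar>f x - g x\<bar> < e"
    using Stone_Weierstrass_real_polynomial_function[OF compact_Icc assms(1) assms(2)] by blast
  obtain c N where gN: "g = (\<lambda>x. \<Sum>i\<le>N. c i * x ^ i)"
    using g(1) real_polynomial_function_iff_sum by blast
  define r where "r = (\<Sum>i\<le>N. monom (c i) i)"
  have pr: "poly r x = g x" for x by (simp add: r_def gN poly_sum poly_monom)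
  have "\<forall>t\<in>{0..a}. \<bar>f t - poly r t\<bar> < e" using g(2) by (simp only: pr) blast
  then show ?thesis by blast
qed

lemma weier_seq:
  fixes f :: "real \<Rightarrow> real"
  assumes "continuous_on {0..a} f"
  shows "\<exists>p. \<forall>n. \<forall>t\<in>{0..a}. \<bar>f t - poly (p n) t\<bar> < epsn n"
proof -
  have "\<forall>n. \<exists>r. \<forall>t\<in>{0..a}. \<bar>f t - poly r t\<bar> < epsn n"
    using weier_poly[OF assms] by simp
  then show ?thesis by (rule choice)
qed

lemma weier_seq_unif:
  assumes "\<And>n t. t \<in> S \<Longrightarrow> \<bar>f t - poly (p n) t\<bar> < epsn n"
  shows "uniform_limit S (\<lambda>n. poly (p n)) f sequentially"
  unfolding uniform_limit_sequentially_iff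
proof (intro allI impI)
  fix e :: real assume "0 < e"
  then obtain N where N: "\<And>n. n \<ge> N \<Longrightarrow> epsn n < e" using epsn_small by blast
  show "\<exists>N. \<forall>n\<ge>N. \<forall>x\<in>S. dist (poly (p n) x) (f x) < e"
  proof (intro exI allI impI ballI)
    fix n x assume "N \<le> n" "x \<in> S"
    then show "dist (poly (p n) x) (f x) < e"
      using assms[of x n] N[of n] by (simp add: dist_real_def abs_minus_commute)
  qed
qed

lemma fcalc_exists:
  fixes T :: "'a::chilbert \<Rightarrow> 'a"
  assumes P: "pos_op T" and fc: "continuous_on {0..onorm T} f"
  shows "\<exists>S. bop S \<and> (\<forall>p :: nat \<Rightarrow> real poly.
        uniform_limit {0..onorm T} (\<lambda>n. poly (p n)) f sequentially \<longrightarrow>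
        ((\<lambda>n. onorm (\<lambda>x. poly_op (p n) T x - S x)) \<longlonglongrightarrow> 0))"
proof -
  define a where "a = onorm T"
  have B: "bop T" using P by (rule pos_op_bop)
  obtain p where p: "\<And>n t. t \<in> {0..a} \<Longrightarrow> \<bar>f t - poly (p n) t\<bar> < epsn n"
    using weier_seq[OF fc[folded a_def]] by blast
  have cp: "norm (poly_op (p n) T x - poly_op (p m) T x) \<le> (epsn n + epsn m) * norm x" for n m x
  proof -
    have "norm (poly_op (p n - p m) T x) \<le> (epsn n + epsn m) * norm x"
    proof (rule poly_norm_bound[OF P order_refl])
      fix t assume "0 \<le> t" "t \<le> onorm T"
      then have "t \<in> {0..a}" by (simp add: a_def)
      then show "\<bar>poly (p n - p m) t\<bar> \<le> epsn n + epsn m"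
        using p[of t n] p[of t m] by simp
    qed
    then show ?thesis by (simp add: poly_op_diff)
  qed
  have conv: "convergent (\<lambda>n. poly_op (p n) T x)" for x
  proof -
    have "Cauchy (\<lambda>n. poly_op (p n) T x)"
    proof (rule CauchyI)
      fix e :: real assume e: "0 < e"
      have "0 < 2 * (norm x + 1)" by (simp add: add_nonneg_pos)
      then have "0 < e / (2 * (norm x + 1))" using e by (rule divide_pos_pos[rotated])
      then obtain N where N: "\<And>n. n \<ge> N \<Longrightarrow> epsn n < e / (2 * (norm x + 1))"
        using epsn_small by blast
      show "\<exists>M. \<forall>m\<ge>M. \<forall>n\<ge>M. norm (poly_op (p m) T x - poly_op (p n) T x) < e"
      proof (intro exI allI impI)
        fix m n assume "N \<le> m" "N \<le> n"
        define c where "c = e / (2 * (norm x + 1))"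
        have c0: "0 < c" unfolding c_def by fact
        have ce: "c * (2 * (norm x + 1)) = e" unfolding c_def using \<open>0 < 2 * (norm x + 1)\<close> by simp
        have "epsn m + epsn n < c + c"
          using N[of m] N[of n] \<open>N \<le> m\<close> \<open>N \<le> n\<close> unfolding c_def by (intro add_strict_mono) auto
        then have "(epsn m + epsn n) * norm x \<le> (c + c) * norm x"
          by (intro mult_right_mono) auto
        also have "\<dots> < e" using ce c0 by (simp add: algebra_simps)
        finally have "(epsn m + epsn n) * norm x < e" .
        moreover have "norm (poly_op (p m) T x - poly_op (p n) T x) \<le> (epsn m + epsn n) * norm x"
          by (rule cp)
        ultimately show "norm (poly_op (p m) T x - poly_op (p n) T x) < e" by linarith
      qed
    qed
    then show ?thesis by (simp add: Cauchy_convergent_iff)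
  qed
  define S where "S = (\<lambda>x. lim (\<lambda>n. poly_op (p n) T x))"
  have Slim: "(\<lambda>n. poly_op (p n) T x) \<longlonglongrightarrow> S x" for x
    unfolding S_def using conv[of x] by (simp add: convergent_LIMSEQ_iff)
  have B1: "norm (poly_op (p n) T x - S x) \<le> epsn n * norm x" for n x
  proof (rule LIMSEQ_le)
    show "(\<lambda>m. norm (poly_op (p n) T x - poly_op (p m) T x)) \<longlonglongrightarrow> norm (poly_op (p n) T x - S x)"
      by (intro tendsto_norm tendsto_diff tendsto_const Slim)
    show "(\<lambda>m. (epsn n + epsn m) * norm x) \<longlonglongrightarrow> epsn n * norm x"
      using tendsto_mult[OF tendsto_add[OF tendsto_const[of "epsn n"] epsn_lim] tendsto_const[of "norm x"]]
      by simp
    show "\<exists>N. \<forall>m\<ge>N. norm (poly_op (p n) T x - poly_op (p m) T x) \<le> (epsn n + epsn m) * norm x"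
      using cp by blast
  qed
  have PB: "bop (poly_op (p n) T)" for n by (rule poly_op_bop[OF B])
  have SB: "bop S"
  proof (rule bopI[where K = "onorm (poly_op (p 0) T) + 1"])
    fix x y
    have "norm (S (x + y) - (S x + S y)) \<le> (norm (x + y) + norm x + norm y) * epsn n" for n
    proof -
      have e1: "S (x + y) - (S x + S y) = (S (x + y) - poly_op (p n) T (x + y))
          + (poly_op (p n) T x - S x) + (poly_op (p n) T y - S y)"
        by (simp add: bop_add[OF PB] algebra_simps)
      have "norm (S (x + y) - (S x + S y)) \<le> norm (poly_op (p n) T (x + y) - S (x + y))
          + norm (poly_op (p n) T x - S x) + norm (poly_op (p n) T y - S y)"
        using norm_triangle_ineq[of "S (x + y) - poly_op (p n) T (x + y) + (poly_op (p n) T x - S x)" "poly_op (p n) T y - S y"]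
          norm_triangle_ineq[of "S (x + y) - poly_op (p n) T (x + y)" "poly_op (p n) T x - S x"]
          norm_minus_commute[of "S (x + y)" "poly_op (p n) T (x + y)"]
        unfolding e1 by linarith
      then show ?thesis using B1[of n "x+y"] B1[of n x] B1[of n y] by (simp add: algebra_simps)
    qed
    then have "norm (S (x + y) - (S x + S y)) \<le> 0" by (rule eps_zero)
    then show "S (x + y) = S x + S y" by simp
  next
    fix c x
    have "norm (S (scaleC c x) - scaleC c (S x)) \<le> (norm (scaleC c x) + cmod c * norm x) * epsn n" for n
    proof -
      have e1: "S (scaleC c x) - scaleC c (S x) = (S (scaleC c x) - poly_op (p n) T (scaleC c x))
          + scaleC c (poly_op (p n) T x - S x)"
        by (simp add: bop_scaleC[OF PB] scaleC_diff_right)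
      have "norm (S (scaleC c x) - scaleC c (S x)) \<le> norm (poly_op (p n) T (scaleC c x) - S (scaleC c x))
          + cmod c * norm (poly_op (p n) T x - S x)"
        using norm_triangle_ineq[of "S (scaleC c x) - poly_op (p n) T (scaleC c x)" "scaleC c (poly_op (p n) T x - S x)"]
          norm_minus_commute[of "S (scaleC c x)" "poly_op (p n) T (scaleC c x)"]
          norm_scaleC[of c "poly_op (p n) T x - S x"]
        unfolding e1 by linarith
      also have "\<dots> \<le> epsn n * norm (scaleC c x) + cmod c * (epsn n * norm x)"
        by (intro add_mono B1 mult_left_mono) auto
      finally show ?thesis by (simp add: algebra_simps)
    qed
    then have "norm (S (scaleC c x) - scaleC c (S x)) \<le> 0" by (rule eps_zero)
    then show "S (scaleC c x) = scaleC c (S x)" by simp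
  next
    fix x
    have "norm (S x) \<le> norm (poly_op (p 0) T x) + norm (poly_op (p 0) T x - S x)"
      using norm_triangle_ineq[of "poly_op (p 0) T x" "S x - poly_op (p 0) T x"]
        norm_minus_commute[of "S x" "poly_op (p 0) T x"] by simp
    also have "\<dots> \<le> onorm (poly_op (p 0) T) * norm x + 1 * norm x"
      using B1[of 0 x] by (intro add_mono bop_norm[OF PB]) simp
    finally show "norm (S x) \<le> (onorm (poly_op (p 0) T) + 1) * norm x" by (simp add: algebra_simps)
  qed
  show ?thesis
  proof (intro exI conjI allI impI)
    show "bop S" by (rule SB)
    fix q :: "nat \<Rightarrow> real poly"
    assume q: "uniform_limit {0..onorm T} (\<lambda>n. poly (q n)) f sequentially"
    show "(\<lambda>n. onorm (\<lambda>x. poly_op (q n) T x - S x)) \<longlonglongrightarrow> 0"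
      unfolding LIMSEQ_iff
    proof (intro allI impI)
      fix e :: real assume e: "0 < e"
      obtain N1 where N1: "\<And>k. k \<ge> N1 \<Longrightarrow> \<forall>t\<in>{0..onorm T}. dist (poly (q k) t) (f t) < e / 6"
        using q e unfolding uniform_limit_sequentially_iff by (meson divide_pos_pos zero_less_numeral)
      obtain n where n: "epsn n < e / 6" using epsn_small[of "e/6"] e by auto
      show "\<exists>no. \<forall>k\<ge>no. norm (onorm (\<lambda>x. poly_op (q k) T x - S x) - 0) < e"
      proof (intro exI allI impI)
        fix k assume k: "N1 \<le> k"
        have qb: "bop (\<lambda>x. poly_op (q k) T x - S x)" by (rule bop_minus_op[OF poly_op_bop[OF B] SB])
        have "norm (poly_op (q k) T x - S x) \<le> (e / 2) * norm x" for x
        proof -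
          have "norm (poly_op (q k - p n) T x) \<le> (e / 6 + e / 6) * norm x"
          proof (rule poly_norm_bound[OF P order_refl])
            fix t assume t: "0 \<le> t" "t \<le> onorm T"
            then have "dist (poly (q k) t) (f t) < e / 6" using N1[OF k] by auto
            moreover have "\<bar>f t - poly (p n) t\<bar> < epsn n" using p[of t n] t by (simp add: a_def)
            ultimately show "\<bar>poly (q k - p n) t\<bar> \<le> e / 6 + e / 6"
              using n unfolding dist_real_def poly_diff by arith
          qed
          then have h1: "norm (poly_op (q k) T x - poly_op (p n) T x) \<le> (e / 3) * norm x"
            by (simp add: poly_op_diff)
          have "norm (poly_op (q k) T x - S x) \<le> norm (poly_op (q k) T x - poly_op (p n) T x)
              + norm (poly_op (p n) T x - S x)" by (rule norm_diff_triangle_le) (rule order_refl)+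
          also have "\<dots> \<le> (e / 3) * norm x + (e / 6) * norm x"
            using h1 B1[of n x] mult_right_mono[of "epsn n" "e/6" "norm x"] n by simp
          finally show ?thesis by (simp add: algebra_simps)
        qed
        then have "onorm (\<lambda>x. poly_op (q k) T x - S x) \<le> e / 2"
          using e by (intro onorm_bound) auto
        moreover have "0 \<le> onorm (\<lambda>x. poly_op (q k) T x - S x)" by (rule bop_onorm_nonneg[OF qb])
        ultimately show "norm (onorm (\<lambda>x. poly_op (q k) T x - S x) - 0) < e" using e by simp
      qed
    qed
  qed
qed




lemma fcalc_props:
  fixes T :: "'a::chilbert \<Rightarrow> 'a"
  assumes P: "pos_op T" and fc: "continuous_on {0..onorm T} f"
  shows "bop (fcalc f T) \<and> (\<forall>p :: nat \<Rightarrow> real poly.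
        uniform_limit {0..onorm T} (\<lambda>n. poly (p n)) f sequentially \<longrightarrow>
        ((\<lambda>n. onorm (\<lambda>x. poly_op (p n) T x - fcalc f T x)) \<longlonglongrightarrow> 0))"
proof -
  define Q where "Q = (\<lambda>S. bop S \<and> (\<forall>p :: nat \<Rightarrow> real poly.
        uniform_limit {0..onorm T} (\<lambda>n. poly (p n)) f sequentially \<longrightarrow>
        ((\<lambda>n. onorm (\<lambda>x. poly_op (p n) T x - S x)) \<longlonglongrightarrow> 0)))"
  have B: "bop T" using P by (rule pos_op_bop)
  have ex: "\<exists>S. Q S" unfolding Q_def by (rule fcalc_exists[OF P fc])
  have un: "S1 = S2" if "Q S1" "Q S2" for S1 S2
  proof
    fix x
    obtain p where p: "\<And>n t. t \<in> {0..onorm T} \<Longrightarrow> \<bar>f t - poly (p n) t\<bar> < epsn n"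
      using weier_seq[OF fc] by blast
    have u: "uniform_limit {0..onorm T} (\<lambda>n. poly (p n)) f sequentially"
      by (rule weier_seq_unif) (rule p)
    have B1: "bop S1" and B2: "bop S2" using that by (auto simp: Q_def)
    have l1: "(\<lambda>n. onorm (\<lambda>x. poly_op (p n) T x - S1 x)) \<longlonglongrightarrow> 0" using that(1) u by (auto simp: Q_def)
    have l2: "(\<lambda>n. onorm (\<lambda>x. poly_op (p n) T x - S2 x)) \<longlonglongrightarrow> 0" using that(2) u by (auto simp: Q_def)
    have "norm (S1 x - S2 x) \<le> 0"
    proof (rule LIMSEQ_le_const)
      show "(\<lambda>n. (onorm (\<lambda>x. poly_op (p n) T x - S1 x) + onorm (\<lambda>x. poly_op (p n) T x - S2 x)) * norm x)
            \<longlonglongrightarrow> 0"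
        using tendsto_mult[OF tendsto_add[OF l1 l2] tendsto_const[of "norm x"]] by simp
      show "\<exists>N. \<forall>n\<ge>N. norm (S1 x - S2 x) \<le> (onorm (\<lambda>x. poly_op (p n) T x - S1 x) + onorm (\<lambda>x. poly_op (p n) T x - S2 x)) * norm x"
      proof (intro exI allI impI)
        fix n
        have b1: "bop (\<lambda>x. poly_op (p n) T x - S1 x)" by (rule bop_minus_op[OF poly_op_bop[OF B] B1])
        have b2: "bop (\<lambda>x. poly_op (p n) T x - S2 x)" by (rule bop_minus_op[OF poly_op_bop[OF B] B2])
        have "norm (S1 x - S2 x) \<le> norm (poly_op (p n) T x - S1 x) + norm (poly_op (p n) T x - S2 x)"
          using norm_triangle_ineq4[of "poly_op (p n) T x - S2 x" "poly_op (p n) T x - S1 x"]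
          by (simp add: algebra_simps)
        also have "\<dots> \<le> onorm (\<lambda>x. poly_op (p n) T x - S1 x) * norm x + onorm (\<lambda>x. poly_op (p n) T x - S2 x) * norm x"
          by (intro add_mono) (rule bop_norm[OF b1], rule bop_norm[OF b2])
        finally show "norm (S1 x - S2 x) \<le> (onorm (\<lambda>x. poly_op (p n) T x - S1 x) + onorm (\<lambda>x. poly_op (p n) T x - S2 x)) * norm x"
          by (simp add: algebra_simps)
      qed
    qed
    then show "S1 x = S2 x" by simp
  qed
  have "\<exists>!S. Q S" using ex un by blast
  then have "Q (THE S. Q S)" by (rule theI')
  moreover have "fcalc f T = (THE S. Q S)" unfolding fcalc_def Q_def by simp
  ultimately show ?thesis by (simp add: Q_def)
qed

lemma fcalc_bop:
  fixes T :: "'a::chilbert \<Rightarrow> 'a"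
  assumes P: "pos_op T" and fc: "continuous_on {0..onorm T} f"
  shows "bop (fcalc f T)"
  using fcalc_props[OF P fc] by blast

lemma fcalc_close:
  fixes T :: "'a::chilbert \<Rightarrow> 'a"
  assumes P: "pos_op T" and fc: "continuous_on {0..onorm T} f"
    and r: "\<And>t. t \<in> {0..onorm T} \<Longrightarrow> \<bar>f t - poly r t\<bar> \<le> d"
  shows "norm (poly_op r T x - fcalc f T x) \<le> d * norm x"
proof -
  have B: "bop T" using P by (rule pos_op_bop)
  define F where "F = fcalc f T"
  have FB: "bop F" unfolding F_def by (rule fcalc_bop[OF P fc])
  obtain p where p: "\<And>n t. t \<in> {0..onorm T} \<Longrightarrow> \<bar>f t - poly (p n) t\<bar> < epsn n"
    using weier_seq[OF fc] by blast
  have u: "uniform_limit {0..onorm T} (\<lambda>n. poly (p n)) f sequentially"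
    by (rule weier_seq_unif) (rule p)
  have l: "(\<lambda>n. onorm (\<lambda>x. poly_op (p n) T x - F x)) \<longlonglongrightarrow> 0"
    using fcalc_props[OF P fc] u by (simp add: F_def)
  show ?thesis
  proof (rule LIMSEQ_le_const)
    show "(\<lambda>n. (d + epsn n) * norm x + onorm (\<lambda>x. poly_op (p n) T x - F x) * norm x) \<longlonglongrightarrow> d * norm x"
      using tendsto_add[OF tendsto_mult[OF tendsto_add[OF tendsto_const[of d] epsn_lim] tendsto_const[of "norm x"]]
         tendsto_mult[OF l tendsto_const[of "norm x"]]] by simp
    show "\<exists>N. \<forall>n\<ge>N. norm (poly_op r T x - fcalc f T x) \<le> (d + epsn n) * norm x + onorm (\<lambda>x. poly_op (p n) T x - F x) * norm x"
    proof (intro exI allI impI)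
      fix n
      have b: "bop (\<lambda>x. poly_op (p n) T x - F x)" by (rule bop_minus_op[OF poly_op_bop[OF B] FB])
      have h1: "norm (poly_op (r - p n) T x) \<le> (d + epsn n) * norm x"
      proof (rule poly_norm_bound[OF P order_refl])
        fix t assume "0 \<le> t" "t \<le> onorm T"
        then have "t \<in> {0..onorm T}" by simp
        then show "\<bar>poly (r - p n) t\<bar> \<le> d + epsn n" using r[of t] p[of t n] by simp
      qed
      have "norm (poly_op r T x - F x) \<le> norm (poly_op r T x - poly_op (p n) T x) + norm (poly_op (p n) T x - F x)"
        by (rule norm_diff_triangle_le) (rule order_refl)+
      also have "\<dots> \<le> (d + epsn n) * norm x + onorm (\<lambda>x. poly_op (p n) T x - F x) * norm x"
        using h1 bop_norm[OF b, of x] by (simp add: poly_op_diff)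
      finally show "norm (poly_op r T x - fcalc f T x) \<le> (d + epsn n) * norm x + onorm (\<lambda>x. poly_op (p n) T x - F x) * norm x"
        by (simp add: F_def)
    qed
  qed
qed

lemma Re_cinner_add_scaleR: "Re (cinner x (y + c *\<^sub>R x)) = Re (cinner x y) + c * (norm (x::'a::complex_inner))\<^sup>2"
  by (simp add: cinner_add_right cinner_scaleR_right cinner_self)

lemma Im_cinner_add_scaleR: "Im (cinner x (y + c *\<^sub>R x)) = Im (cinner x (y::'a::complex_inner))"
  by (simp add: cinner_add_right cinner_scaleR_right cinner_self)

lemma fcalc_pos:
  fixes T :: "'a::chilbert \<Rightarrow> 'a"
  assumes P: "pos_op T" and fc: "continuous_on {0..onorm T} f"
    and fnn: "\<And>t. t \<in> {0..onorm T} \<Longrightarrow> 0 \<le> f t"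
  shows "pos_op (fcalc f T)"
proof -
  have B: "bop T" using P by (rule pos_op_bop)
  define F where "F = fcalc f T"
  have FB: "bop F" unfolding F_def by (rule fcalc_bop[OF P fc])
  have key: "- Re (cinner x (F x)) \<le> (2 * (norm x)\<^sup>2) * epsn n \<and> \<bar>Im (cinner x (F x))\<bar> \<le> (2 * (norm x)\<^sup>2) * epsn n" for x n
  proof -
    obtain r where r: "\<forall>t\<in>{0..onorm T}. \<bar>f t - poly r t\<bar> < epsn n"
      using weier_poly[OF fc epsn_pos] by blast
    have c: "norm (poly_op r T x - F x) \<le> epsn n * norm x"
      unfolding F_def by (rule fcalc_close[OF P fc]) (use r in \<open>auto intro: less_imp_le\<close>)
    have ppos: "pos_op (poly_op (r + [:epsn n:]) T)"
    proof (rule poly_pos[OF P order_refl])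
      fix t assume "0 \<le> t" "t \<le> onorm T"
      then have "t \<in> {0..onorm T}" by simp
      then show "0 \<le> poly (r + [:epsn n:]) t" using r fnn[of t] by fastforce
    qed
    define y where "y = poly_op r T x"
    have ye: "poly_op (r + [:epsn n:]) T x = y + epsn n *\<^sub>R x" by (simp add: y_def poly_op_add poly_op_const)
    from pos_opD[OF ppos, of x] have "0 \<le> Re (cinner x (y + epsn n *\<^sub>R x))" by (simp only: ye)
    then have re: "0 \<le> Re (cinner x y) + epsn n * (norm x)\<^sup>2"
      by (simp only: Re_cinner_add_scaleR)
    from ppos have "Im (cinner x (poly_op (r + [:epsn n:]) T x)) = 0" by (simp add: pos_op_def)
    then have "Im (cinner x (y + epsn n *\<^sub>R x)) = 0" by (simp only: ye)
    then have im: "Im (cinner x y) = 0"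
      by (simp only: Im_cinner_add_scaleR)
    have d: "cmod (cinner x (F x) - cinner x y) \<le> epsn n * (norm x)\<^sup>2"
    proof -
      have "cmod (cinner x (F x) - cinner x y) = cmod (cinner x (F x - y))" by (simp add: cinner_diff_right)
      also have "\<dots> \<le> norm x * norm (F x - y)" by (rule cinner_cs)
      also have "\<dots> \<le> norm x * (epsn n * norm x)"
        using c by (intro mult_left_mono) (auto simp: y_def norm_minus_commute)
      finally show ?thesis by (simp add: power2_eq_square mult_ac)
    qed
    have "\<bar>Re (cinner x (F x)) - Re (cinner x y)\<bar> \<le> epsn n * (norm x)\<^sup>2"
      using abs_Re_le_cmod[of "cinner x (F x) - cinner x y"] d by simp
    moreover have "\<bar>Im (cinner x (F x)) - Im (cinner x y)\<bar> \<le> epsn n * (norm x)\<^sup>2"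
      using abs_Im_le_cmod[of "cinner x (F x) - cinner x y"] d by simp
    moreover have "0 \<le> epsn n * (norm x)\<^sup>2" by simp
    ultimately show ?thesis using re im by (simp add: algebra_simps abs_le_iff) 
  qed
  have "Im (cinner x (F x)) = 0 \<and> 0 \<le> Re (cinner x (F x))" for x
  proof -
    have "- Re (cinner x (F x)) \<le> 0" by (rule eps_zero) (use key in blast)
    moreover have "\<bar>Im (cinner x (F x))\<bar> \<le> 0" by (rule eps_zero) (use key in blast)
    ultimately show ?thesis by simp
  qed
  then show ?thesis unfolding pos_op_def F_def using FB[unfolded F_def] by blast
qed




lemma fcalc_sq:
  fixes T :: "'a::chilbert \<Rightarrow> 'a"
  assumes P: "pos_op T" and fc: "continuous_on {0..onorm T} f"
    and K: "\<And>t. t \<in> {0..onorm T} \<Longrightarrow> \<bar>f t\<bar> \<le> K"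
    and sq: "\<And>t. t \<in> {0..onorm T} \<Longrightarrow> f t * f t = t"
  shows "fcalc f T (fcalc f T x) = T x"
proof -
  have B: "bop T" using P by (rule pos_op_bop)
  define F where "F = fcalc f T"
  have FB: "bop F" unfolding F_def by (rule fcalc_bop[OF P fc])
  have K0: "0 \<le> K" using K[of 0] bop_onorm_nonneg[OF B] by auto
  have key: "norm (F (F x) - T x) \<le> ((2 * onorm F + 1 + 2 * K + 1) * norm x) * epsn n" for n
  proof -
    define e where "e = epsn n"
    have e0: "0 < e" "e \<le> 1" by (auto simp: e_def field_simps)
    obtain r where r: "\<forall>t\<in>{0..onorm T}. \<bar>f t - poly r t\<bar> < e"
      using weier_poly[OF fc e0(1)] by blast
    define R where "R = poly_op r T"
    have RB: "bop R" unfolding R_def by (rule poly_op_bop[OF B])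
    have c: "norm (R y - F y) \<le> e * norm y" for y
      unfolding R_def F_def by (rule fcalc_close[OF P fc]) (use r in \<open>auto intro: less_imp_le\<close>)
    have h1: "norm (poly_op (r * r - [:0, 1:]) T x) \<le> (e * (2 * K + 1)) * norm x"
    proof (rule poly_norm_bound[OF P order_refl])
      fix t assume "0 \<le> t" "t \<le> onorm T"
      then have t: "t \<in> {0..onorm T}" by simp
      have a: "\<bar>f t - poly r t\<bar> \<le> e" using r t by (auto intro: less_imp_le)
      have b: "\<bar>f t + poly r t\<bar> \<le> 2 * K + 1"
        using K[OF t] a e0 by (simp add: abs_le_iff)
      have "poly (r * r - [:0, 1:]) t = - ((f t - poly r t) * (f t + poly r t))"
        using sq[OF t] by (simp add: algebra_simps)
      then have "\<bar>poly (r * r - [:0, 1:]) t\<bar> = \<bar>f t - poly r t\<bar> * \<bar>f t + poly r t\<bar>"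
        by (simp add: abs_mult)
      also have "\<dots> \<le> e * (2 * K + 1)" using a b by (intro mult_mono) auto
      finally show "\<bar>poly (r * r - [:0, 1:]) t\<bar> \<le> e * (2 * K + 1)" .
    qed
    have h1': "norm (R (R x) - T x) \<le> (e * (2 * K + 1)) * norm x"
      using h1 by (simp add: poly_op_diff poly_op_mult[OF B] poly_op_X[OF B] R_def)
    have "norm (F (F x) - R (R x)) \<le> norm (F (F x - R x)) + norm (F (R x) - R (R x))"
    proof -
      have e1: "F (F x) - R (R x) = F (F x - R x) + (F (R x) - R (R x))" by (simp add: bop_diff[OF FB])
      show ?thesis unfolding e1 by (rule norm_triangle_ineq)
    qed
    also have "\<dots> \<le> onorm F * (e * norm x) + e * ((onorm F + 1) * norm x)"
    proof (rule add_mono)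
      have "norm (F (F x - R x)) \<le> onorm F * norm (F x - R x)" by (rule bop_norm[OF FB])
      also have "\<dots> \<le> onorm F * (e * norm x)"
        using c[of x] bop_onorm_nonneg[OF FB] by (intro mult_left_mono) (auto simp: norm_minus_commute)
      finally show "norm (F (F x - R x)) \<le> onorm F * (e * norm x)" .
      have "norm (R x) \<le> norm (F x) + norm (R x - F x)" using norm_triangle_ineq[of "F x" "R x - F x"] by simp
      also have "\<dots> \<le> onorm F * norm x + e * norm x" using c[of x] bop_norm[OF FB, of x] by simp
      also have "\<dots> \<le> (onorm F + 1) * norm x"
        using mult_right_mono[OF e0(2) norm_ge_zero[of x]] by (simp add: algebra_simps)
      finally have nr: "norm (R x) \<le> (onorm F + 1) * norm x" .
      have "norm (F (R x) - R (R x)) \<le> e * norm (R x)" using c[of "R x"] by (simp add: norm_minus_commute)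
      also have "\<dots> \<le> e * ((onorm F + 1) * norm x)" using nr e0 by (intro mult_left_mono) auto
      finally show "norm (F (R x) - R (R x)) \<le> e * ((onorm F + 1) * norm x)" .
    qed
    finally have h2: "norm (F (F x) - R (R x)) \<le> onorm F * (e * norm x) + e * ((onorm F + 1) * norm x)" .
    have "norm (F (F x) - T x) \<le> norm (F (F x) - R (R x)) + norm (R (R x) - T x)"
      by (rule norm_diff_triangle_le) (rule order_refl)+
    also have "\<dots> \<le> onorm F * (e * norm x) + e * ((onorm F + 1) * norm x) + (e * (2 * K + 1)) * norm x"
      using h1' h2 by simp
    also have "\<dots> = ((2 * onorm F + 1 + 2 * K + 1) * norm x) * e" by (simp add: algebra_simps)
    finally show ?thesis by (simp add: e_def)
  qed
  have "norm (F (F x) - T x) \<le> 0" by (rule eps_zero) (rule key)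
  then show ?thesis by (simp add: F_def)
qed

lemma poly_eig:
  fixes S :: "'a::complex_inner \<Rightarrow> 'a"
  assumes B: "bop S" and lim: "(\<lambda>n. S (x n) - l *\<^sub>R x n) \<longlonglongrightarrow> 0"
  shows "(\<lambda>n. poly_op p S (x n) - poly p l *\<^sub>R x n) \<longlonglongrightarrow> 0"
proof (induction p)
  case 0 then show ?case by simp
next
  case (pCons c p)
  have eq: "poly_op (pCons c p) S (x n) - poly (pCons c p) l *\<^sub>R x n
      = S (poly_op p S (x n) - poly p l *\<^sub>R x n) + poly p l *\<^sub>R (S (x n) - l *\<^sub>R x n)" for n
    by (simp add: poly_op_pCons[OF B] bop_diff[OF B] bop_scaleR[OF B] algebra_simps scaleR_add_left scaleR_diff_right)
  have t1: "(\<lambda>n. S (poly_op p S (x n) - poly p l *\<^sub>R x n)) \<longlonglongrightarrow> S 0"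
    by (rule bounded_linear.tendsto[OF bop_bl[OF B] pCons.IH])
  have t2: "(\<lambda>n. poly p l *\<^sub>R (S (x n) - l *\<^sub>R x n)) \<longlonglongrightarrow> poly p l *\<^sub>R 0"
    by (rule tendsto_scaleR[OF tendsto_const lim])
  have "(\<lambda>n. S (poly_op p S (x n) - poly p l *\<^sub>R x n) + poly p l *\<^sub>R (S (x n) - l *\<^sub>R x n)) \<longlonglongrightarrow> S 0 + poly p l *\<^sub>R 0"
    by (rule tendsto_add[OF t1 t2])
  moreover have "(\<lambda>n. poly_op (pCons c p) S (x n) - poly (pCons c p) l *\<^sub>R x n)
      = (\<lambda>n. S (poly_op p S (x n) - poly p l *\<^sub>R x n) + poly p l *\<^sub>R (S (x n) - l *\<^sub>R x n))"
    by (rule ext) (rule eq)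
  ultimately show ?case by (simp add: bop_zero[OF B])
qed

lemma fcalc_eig:
  fixes S :: "'a::chilbert \<Rightarrow> 'a"
  assumes P: "pos_op S" and fc: "continuous_on {0..onorm S} f"
    and x1: "\<And>n. norm (x n) = 1" and l: "l \<in> {0..onorm S}"
    and lim: "(\<lambda>n. S (x n) - l *\<^sub>R x n) \<longlonglongrightarrow> 0"
  shows "(\<lambda>n. fcalc f S (x n) - f l *\<^sub>R x n) \<longlonglongrightarrow> 0"
  unfolding LIMSEQ_iff
proof (intro allI impI)
  fix e :: real assume e: "0 < e"
  have B: "bop S" using P by (rule pos_op_bop)
  obtain r where r: "\<forall>t\<in>{0..onorm S}. \<bar>f t - poly r t\<bar> < e / 3"
    using weier_poly[OF fc, of "e/3"] e by auto
  have c: "norm (poly_op r S y - fcalc f S y) \<le> e / 3 * norm y" for y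
    by (rule fcalc_close[OF P fc]) (use r in \<open>auto intro: less_imp_le\<close>)
  have pe: "(\<lambda>n. poly_op r S (x n) - poly r l *\<^sub>R x n) \<longlonglongrightarrow> 0" by (rule poly_eig[OF B lim])
  then obtain N where N: "\<And>n. n \<ge> N \<Longrightarrow> norm (poly_op r S (x n) - poly r l *\<^sub>R x n) < e / 3"
    unfolding LIMSEQ_iff using e by (metis diff_zero divide_pos_pos zero_less_numeral)
  show "\<exists>no. \<forall>n\<ge>no. norm (fcalc f S (x n) - f l *\<^sub>R x n - 0) < e"
  proof (intro exI allI impI)
    fix n assume n: "N \<le> n"
    have e1: "fcalc f S (x n) - f l *\<^sub>R x n = (fcalc f S (x n) - poly_op r S (x n))
        + (poly_op r S (x n) - poly r l *\<^sub>R x n) + (poly r l - f l) *\<^sub>R x n"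
      by (simp add: algebra_simps scaleR_diff_left)
    have "norm (fcalc f S (x n) - f l *\<^sub>R x n) \<le> norm (fcalc f S (x n) - poly_op r S (x n))
        + norm (poly_op r S (x n) - poly r l *\<^sub>R x n) + norm ((poly r l - f l) *\<^sub>R x n)"
      unfolding e1
      using norm_triangle_ineq[of "fcalc f S (x n) - poly_op r S (x n) + (poly_op r S (x n) - poly r l *\<^sub>R x n)" "(poly r l - f l) *\<^sub>R x n"]
        norm_triangle_ineq[of "fcalc f S (x n) - poly_op r S (x n)" "poly_op r S (x n) - poly r l *\<^sub>R x n"]
      by linarith
    also have "\<dots> < e / 3 + e / 3 + e / 3"
    proof -
      have "norm (fcalc f S (x n) - poly_op r S (x n)) \<le> e / 3"
        using c[of "x n"] x1[of n] by (simp add: norm_minus_commute)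
      moreover have "norm ((poly r l - f l) *\<^sub>R x n) < e / 3"
        using r l x1[of n] by (simp add: abs_minus_commute)
      ultimately show ?thesis using N[OF n] by linarith
    qed
    finally show "norm (fcalc f S (x n) - f l *\<^sub>R x n - 0) < e" by simp
  qed
qed




section \<open>Absolute value\<close>

lemma sqrt_cont: "continuous_on S (sqrt :: real \<Rightarrow> real)"
  using continuous_on_real_sqrt[OF continuous_on_id] by simp

lemma pos_adj_mult:
  fixes B :: "'a::chilbert \<Rightarrow> 'a"
  assumes B: "bop B"
  shows "pos_op (\<lambda>x. adj B (B x))"
  unfolding pos_op_def
proof (intro conjI allI)
  show "bop (\<lambda>x. adj B (B x))" by (rule bop_comp[OF adj_bop[OF B] B])
  fix x
  have e: "cinner x (adj B (B x)) = complex_of_real ((norm (B x))\<^sup>2)"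
    using adj_prop[OF B, of x "B x"] by (simp add: cinner_self)
  show "Im (cinner x (adj B (B x))) = 0" by (simp add: e)
  show "0 \<le> Re (cinner x (adj B (B x)))" by (simp add: e)
qed

lemma abs_op_facts:
  fixes B :: "'a::chilbert \<Rightarrow> 'a"
  assumes B: "bop B"
  shows "pos_op (abs_op B)" and "abs_op B (abs_op B x) = adj B (B x)"
    and "norm (abs_op B x) = norm (B x)" and "onorm (abs_op B) \<le> onorm B"
proof -
  define T where "T = (\<lambda>x. adj B (B x))"
  have P: "pos_op T" unfolding T_def by (rule pos_adj_mult[OF B])
  have Q: "abs_op B = fcalc sqrt T" by (simp add: abs_op_def T_def)
  show QP: "pos_op (abs_op B)" unfolding Q by (rule fcalc_pos[OF P sqrt_cont]) simp
  have QQ: "abs_op B (abs_op B y) = T y" for y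
    unfolding Q
  proof (rule fcalc_sq[OF P sqrt_cont, where K = "sqrt (onorm T)"])
    fix t assume "t \<in> {0..onorm T}"
    then show "\<bar>sqrt t\<bar> \<le> sqrt (onorm T)" "sqrt t * sqrt t = t" by auto
  qed
  then show "abs_op B (abs_op B x) = adj B (B x)" by (simp add: T_def)
  have nq: "norm (abs_op B y) = norm (B y)" for y
  proof -
    have "cinner (abs_op B y) (abs_op B y) = cinner y (abs_op B (abs_op B y))"
      by (rule hermD[OF pos_herm[OF QP], symmetric])
    also have "\<dots> = cinner (B y) (B y)" by (simp add: QQ T_def adj_prop[OF B])
    finally have "Re (cinner (abs_op B y) (abs_op B y)) = Re (cinner (B y) (B y))" by simp
    then have "(norm (abs_op B y))\<^sup>2 = (norm (B y))\<^sup>2" by (simp only: Re_cinner_self)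
    then show ?thesis by (simp add: power2_eq_iff_nonneg)
  qed
  then show "norm (abs_op B x) = norm (B x)" .
  show "onorm (abs_op B) \<le> onorm B"
    by (rule onorm_bound[OF bop_onorm_nonneg[OF B]]) (simp add: nq bop_norm[OF B])
qed

lemma abs_op_approx:
  fixes B :: "'a::chilbert \<Rightarrow> 'a"
  assumes B: "bop B" and M: "0 < M" "onorm B \<le> M" and x: "norm x = 1"
  shows "(norm (abs_op B x - M *\<^sub>R x))\<^sup>2 \<le> 2 * (M\<^sup>2 - (norm (B x))\<^sup>2)"
proof -
  define Q where "Q = abs_op B"
  have QP: "pos_op Q" and QQ: "Q (Q y) = adj B (B y)" for y
    using abs_op_facts[OF B] by (auto simp: Q_def)
  have QB: "bop Q" using QP by (rule pos_op_bop)
  have nBx: "norm (B x) \<le> M" using bop_norm[OF B, of x] M x by simp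
  have nBBx: "norm (adj B (B x)) \<le> M * M"
  proof -
    have "norm (adj B (B x)) \<le> onorm B * norm (B x)" by (rule adj_norm[OF B])
    also have "\<dots> \<le> M * M" using nBx M bop_onorm_nonneg[OF B] by (intro mult_mono) auto
    finally show ?thesis .
  qed
  have "cinner x (adj B (B x)) = cinner (B x) (B x)" by (rule adj_prop[OF B, symmetric])
  then have inn: "Re (cinner x (adj B (B x))) = (norm (B x))\<^sup>2" by (simp add: Re_cinner_self)
  have w: "(norm (adj B (B x) - M\<^sup>2 *\<^sub>R x))\<^sup>2 \<le> 2 * M\<^sup>2 * (M\<^sup>2 - (norm (B x))\<^sup>2)"
  proof -
    have "(norm (adj B (B x) - M\<^sup>2 *\<^sub>R x))\<^sup>2 = (norm (adj B (B x)))\<^sup>2 + M\<^sup>2 * M\<^sup>2 - 2 * M\<^sup>2 * (norm (B x))\<^sup>2"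
    proof -
      have r1: "Re (cinner (adj B (B x)) (M\<^sup>2 *\<^sub>R x)) = M\<^sup>2 * (norm (B x))\<^sup>2"
        using inn by (simp add: cinner_scaleR_right Re_cinner_sym[of "adj B (B x)"])
      have r2: "norm (M\<^sup>2 *\<^sub>R x) = M\<^sup>2" using x by simp
      show ?thesis unfolding norm_diff_sq r1 r2 by (simp add: power2_eq_square)
    qed
    also have "(norm (adj B (B x)))\<^sup>2 \<le> M\<^sup>2 * M\<^sup>2"
      using nBBx by (simp add: power2_eq_square mult_mono)
    finally show ?thesis by (simp add: algebra_simps)
  qed
  define v where "v = Q x - M *\<^sub>R x"
  have Qv: "Q v + M *\<^sub>R v = adj B (B x) - M\<^sup>2 *\<^sub>R x"
    by (simp add: v_def bop_diff[OF QB] bop_scaleR[OF QB] QQ algebra_simps power2_eq_square)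
  have "M * norm v \<le> norm (Q v + M *\<^sub>R v)"
  proof (rule bb_from_inner[OF M(1)])
    show "M * (norm v)\<^sup>2 \<le> Re (cinner v (Q v + M *\<^sub>R v))"
      using pos_opD[OF QP, of v] by (simp add: Re_cinner_add_scaleR)
  qed
  then have "(M * norm v)\<^sup>2 \<le> (norm (adj B (B x) - M\<^sup>2 *\<^sub>R x))\<^sup>2"
    using M by (simp add: Qv power_mono)
  with w have "M\<^sup>2 * (norm v)\<^sup>2 \<le> M\<^sup>2 * (2 * (M\<^sup>2 - (norm (B x))\<^sup>2))"
    by (simp add: power_mult_distrib algebra_simps)
  then show ?thesis using M by (simp add: v_def Q_def)
qed

section \<open>Square root monotonicity\<close>

lemma sqrt_mono_op:
  fixes C Bq :: "'a::complex_inner \<Rightarrow> 'a"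
  assumes PC: "pos_op C" and PB: "pos_op Bq"
    and sq: "\<And>x. Re (cinner x (Bq (Bq x))) \<le> Re (cinner x (C (C x)))"
  shows "Re (cinner x (Bq x)) \<le> Re (cinner x (C x))"
proof (rule ccontr)
  assume neg: "\<not> ?thesis"
  define D where "D = (\<lambda>x. C x - Bq x)"
  have CB: "bop C" using PC by (rule pos_op_bop)
  have BB: "bop Bq" using PB by (rule pos_op_bop)
  have HC: "herm C" using PC by (rule pos_herm)
  have HB: "herm Bq" using PB by (rule pos_herm)
  have DB: "bop D" unfolding D_def by (rule bop_minus_op[OF CB BB])
  have DH: "herm D" unfolding D_def herm_def
    by (simp add: cinner_diff_left cinner_diff_right hermD[OF HC] hermD[OF HB])
  have "Re (cinner x (D x)) < 0" using neg by (simp add: D_def cinner_diff_right)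
  then obtain m where m: "m < 0" and ap: "\<And>e. e > 0 \<Longrightarrow> \<exists>x. norm x = 1 \<and> norm (D x - m *\<^sub>R x) < e"
    using approx_inf[OF DB DH] by blast
  define K where "K = onorm C + onorm Bq"
  have K0: "0 \<le> K" unfolding K_def using bop_onorm_nonneg[OF CB] bop_onorm_nonneg[OF BB] by simp
  define e where "e = m\<^sup>2 / (2 * (K - m))"
  have e0: "0 < e" using m K0 by (simp add: e_def)
  obtain x where x: "norm x = 1" and ex: "norm (D x - m *\<^sub>R x) < e" using ap[OF e0] by blast
  define r where "r = D x - m *\<^sub>R x"
  have Dx: "D x = m *\<^sub>R x + r" by (simp add: r_def)
  define s where "s = Re (cinner x (C x)) + Re (cinner x (Bq x))"
  have sC: "0 \<le> Re (cinner x (C x))" by (rule pos_opD[OF PC])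
  have sB: "0 \<le> Re (cinner x (Bq x))" by (rule pos_opD[OF PB])
  
  have id: "Re (cinner x (C (C x))) - Re (cinner x (Bq (Bq x))) = Re (cinner (C x + Bq x) (D x))"
  proof -
    have a: "cinner x (C (C x)) = cinner (C x) (C x)" by (rule hermD[OF HC])
    have b: "cinner x (Bq (Bq x)) = cinner (Bq x) (Bq x)" by (rule hermD[OF HB])
    have c: "Re (cinner (Bq x) (C x)) = Re (cinner (C x) (Bq x))" by (rule Re_cinner_sym)
    show ?thesis
      by (simp add: a b D_def cinner_add_left cinner_diff_right c)
  qed
  have nn: "0 \<le> Re (cinner (C x + Bq x) (D x))" using id sq[of x] by simp
  have t1: "Re (cinner (C x + Bq x) (D x)) = m * s + Re (cinner (C x + Bq x) r)"
  proof -
    have "Re (cinner (C x + Bq x) x) = s"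
      by (simp add: s_def cinner_add_left Re_cinner_sym)
    then show ?thesis by (simp add: Dx cinner_add_right cinner_scaleR_right)
  qed
  have t2: "Re (cinner (C x + Bq x) r) \<le> K * e"
  proof -
    have "Re (cinner (C x + Bq x) r) \<le> norm (C x + Bq x) * norm r" by (rule Re_cinner_le)
    also have "norm (C x + Bq x) \<le> K"
      using norm_triangle_ineq[of "C x" "Bq x"] bop_norm[OF CB, of x] bop_norm[OF BB, of x] x
      by (simp add: K_def)
    then have "norm (C x + Bq x) * norm r \<le> K * e"
      using ex by (intro mult_mono) (auto simp: r_def K0)
    finally show ?thesis .
  qed
  have ms: "- (K * e) \<le> m * s" using nn t1 t2 by linarith
  have t3: "Re (cinner x (D x)) \<le> m + e"
  proof -
    have "Re (cinner x (D x)) = m + Re (cinner x r)" using x by (simp add: Dx cinner_add_right cinner_scaleR_right Re_cinner_self)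
    moreover have "Re (cinner x r) \<le> e" using Re_cinner_le[of x r] x ex by (simp add: r_def)
    ultimately show ?thesis by simp
  qed
  have t4: "- s \<le> Re (cinner x (D x))"
    using sC sB by (simp add: D_def cinner_diff_right s_def)
  have "s \<ge> - m - e" using t3 t4 by linarith
  then have "m * s \<le> m * (- m - e)" using m by (simp add: mult_le_cancel_left)
  with ms have "m\<^sup>2 \<le> e * (K - m)" by (simp add: power2_eq_square algebra_simps)
  also have "e * (K - m) = m\<^sup>2 / 2" using m K0 by (simp add: e_def field_simps)
  finally show False using m by simp
qed




lemma adj_approx:
  fixes B :: "'a::chilbert \<Rightarrow> 'a"
  assumes B: "bop B" and M: "0 < M" "onorm B \<le> M" and x: "norm x = 1"
  shows "(norm (adj B (B x) - M\<^sup>2 *\<^sub>R x))\<^sup>2 \<le> 2 * M\<^sup>2 * (M\<^sup>2 - (norm (B x))\<^sup>2)"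
proof -
  have nBx: "norm (B x) \<le> M" using bop_norm[OF B, of x] M x by simp
  have nBBx: "norm (adj B (B x)) \<le> M * M"
  proof -
    have "norm (adj B (B x)) \<le> onorm B * norm (B x)" by (rule adj_norm[OF B])
    also have "\<dots> \<le> M * M" using nBx M bop_onorm_nonneg[OF B] by (intro mult_mono) auto
    finally show ?thesis .
  qed
  have "cinner x (adj B (B x)) = cinner (B x) (B x)" by (rule adj_prop[OF B, symmetric])
  then have inn: "Re (cinner x (adj B (B x))) = (norm (B x))\<^sup>2" by (simp add: Re_cinner_self)
  have "(norm (adj B (B x) - M\<^sup>2 *\<^sub>R x))\<^sup>2 = (norm (adj B (B x)))\<^sup>2 + M\<^sup>2 * M\<^sup>2 - 2 * M\<^sup>2 * (norm (B x))\<^sup>2"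
  proof -
    have r1: "Re (cinner (adj B (B x)) (M\<^sup>2 *\<^sub>R x)) = M\<^sup>2 * (norm (B x))\<^sup>2"
      using inn by (simp add: cinner_scaleR_right Re_cinner_sym[of "adj B (B x)"])
    have r2: "norm (M\<^sup>2 *\<^sub>R x) = M\<^sup>2" using x by simp
    show ?thesis unfolding norm_diff_sq r1 r2 by (simp add: power2_eq_square)
  qed
  also have "(norm (adj B (B x)))\<^sup>2 \<le> M\<^sup>2 * M\<^sup>2"
    using nBBx by (simp add: power2_eq_square mult_mono)
  finally show ?thesis by (simp add: algebra_simps)
qed

lemma onorm_approx:
  fixes A :: "'a::complex_inner \<Rightarrow> 'a"
  assumes B: "bop A" and eta: "0 < eta" "eta \<le> onorm A"
  shows "\<exists>y. norm y = 1 \<and> onorm A - eta < norm (A y)"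
proof (rule ccontr)
  assume neg: "\<not> ?thesis"
  then have all: "\<forall>y. norm y = 1 \<longrightarrow> norm (A y) \<le> onorm A - eta" by (auto simp: not_less)
  have h: "norm (A y) \<le> (onorm A - eta) * norm y" for y
  proof (cases "y = 0")
    case True then show ?thesis by (simp add: bop_zero[OF B])
  next
    case False
    define u where "u = (1 / norm y) *\<^sub>R y"
    have "norm u = 1" using False by (simp add: u_def)
    then have "norm (A u) \<le> onorm A - eta" using all by blast
    moreover have "norm (A u) = norm (A y) / norm y" using False by (simp add: u_def bop_scaleR[OF B])
    ultimately show ?thesis using False by (simp add: field_simps)
  qed
  have "onorm A \<le> onorm A - eta" by (rule onorm_bound) (use eta h in auto)
  then show False using eta by simp
qed

lemma hypo_approx:
  fixes A :: "'a::chilbert \<Rightarrow> 'a"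
  assumes B: "bop A" and M: "0 < onorm A" and d: "0 < d"
  shows "\<exists>x. norm x = 1 \<and> onorm A - d \<le> norm (adj A x)"
proof -
  define M where "M = onorm A"
  have M0: "0 < M" using M by (simp add: M_def)
  define eta where "eta = min (M / 2) (d\<^sup>2 / (4 * M))"
  have eta0: "0 < eta" using M0 d by (simp add: eta_def)
  have etaM: "eta \<le> M / 2" "eta \<le> d\<^sup>2 / (4 * M)" by (auto simp: eta_def)
  obtain y where y: "norm y = 1" "M - eta < norm (A y)"
    using onorm_approx[OF B eta0] etaM M0 by (auto simp: M_def)
  have nAy: "norm (A y) \<le> M" using bop_norm[OF B, of y] y by (simp add: M_def)
  have Ay0: "0 < norm (A y)" using y etaM M0 by linarith
  have w: "(norm (adj A (A y) - M\<^sup>2 *\<^sub>R y))\<^sup>2 \<le> 2 * M\<^sup>2 * (M\<^sup>2 - (norm (A y))\<^sup>2)"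
    by (rule adj_approx[OF B M0 _ y(1)]) (simp add: M_def)
  have "(M - eta)\<^sup>2 \<le> (norm (A y))\<^sup>2" using y etaM M0 by (intro power_mono) auto
  moreover have "(M - eta)\<^sup>2 = M\<^sup>2 - 2 * M * eta + eta\<^sup>2" by (simp add: power2_eq_square algebra_simps)
  ultimately have "M\<^sup>2 - (norm (A y))\<^sup>2 \<le> 2 * M * eta" using zero_le_power2[of eta] by linarith
  then have "2 * M\<^sup>2 * (M\<^sup>2 - (norm (A y))\<^sup>2) \<le> 2 * M\<^sup>2 * (2 * M * eta)"
    by (rule mult_left_mono) simp
  with w have "(norm (adj A (A y) - M\<^sup>2 *\<^sub>R y))\<^sup>2 \<le> 2 * M\<^sup>2 * (2 * M * eta)"
    by (rule order_trans)
  also have "\<dots> \<le> 2 * M\<^sup>2 * (2 * M * (d\<^sup>2 / (4 * M)))"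
    using etaM M0 by (intro mult_left_mono) auto
  also have "\<dots> = (M * d)\<^sup>2" using M0 by (simp add: power2_eq_square field_simps)
  finally have sq: "(norm (adj A (A y) - M\<^sup>2 *\<^sub>R y))\<^sup>2 \<le> (M * d)\<^sup>2" .
  have "norm (adj A (A y) - M\<^sup>2 *\<^sub>R y) \<le> M * d"
    by (rule power2_le_imp_le[OF sq]) (use M0 d in simp)
  then have lo: "M\<^sup>2 - M * d \<le> norm (adj A (A y))"
    using norm_triangle_ineq2[of "M\<^sup>2 *\<^sub>R y" "adj A (A y)"] y norm_minus_commute[of "adj A (A y)" "M\<^sup>2 *\<^sub>R y"]
    by simp
  define x where "x = (1 / norm (A y)) *\<^sub>R A y"
  have x1: "norm x = 1" using Ay0 by (simp add: x_def)
  have nx: "norm (adj A x) = norm (adj A (A y)) / norm (A y)"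
    using Ay0 by (simp add: x_def bop_scaleR[OF adj_bop[OF B]])
  have "M - d \<le> norm (adj A x)"
  proof (cases "M - d \<le> 0")
    case True then show ?thesis by (meson norm_ge_zero order_trans)
  next
    case False
    have "M - d = (M\<^sup>2 - M * d) / M" using M0 by (simp add: power2_eq_square field_simps)
    also have "\<dots> \<le> (M\<^sup>2 - M * d) / norm (A y)"
    proof (rule divide_left_mono)
      show "norm (A y) \<le> M" by (rule nAy)
      have "M * d \<le> M * M" using False M0 by (intro mult_left_mono) auto
      then show "0 \<le> M\<^sup>2 - M * d" by (simp add: power2_eq_square)
      show "0 < M * norm (A y)" using M0 Ay0 by simp
    qed
    also have "\<dots> \<le> norm (adj A (A y)) / norm (A y)" using lo Ay0 by (intro divide_right_mono) auto
    finally show ?thesis by (simp add: nx)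
  qed
  then show ?thesis using x1 by (auto simp: M_def)
qed

lemma pos_scale:
  assumes P: "pos_op Q" and c: "0 \<le> c"
  shows "pos_op (\<lambda>y. c *\<^sub>R Q y)"
  unfolding pos_op_def
proof (intro conjI allI)
  show "bop (\<lambda>y. c *\<^sub>R Q y)" by (rule bop_scaleR_op[OF pos_op_bop[OF P]])
  fix x
  show "Im (cinner x (c *\<^sub>R Q x)) = 0"
    using P by (simp add: cinner_scaleR_right pos_op_def)
  show "0 \<le> Re (cinner x (c *\<^sub>R Q x))"
    using pos_opD[OF P, of x] c by (simp add: cinner_scaleR_right)
qed

lemma fcalc_two:
  fixes S1 S2 :: "'a::chilbert \<Rightarrow> 'a"
  assumes P1: "pos_op S1" and P2: "pos_op S2" and fc: "continuous_on {0..} f"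
    and X: "\<And>n. norm (X n) = 1" and L: "0 \<le> L" "L \<le> onorm S1" "L \<le> onorm S2"
    and l1: "(\<lambda>n. S1 (X n) - L *\<^sub>R X n) \<longlonglongrightarrow> 0"
    and l2: "(\<lambda>n. S2 (X n) - L *\<^sub>R X n) \<longlonglongrightarrow> 0"
  shows "2 * f L \<le> onorm (\<lambda>x. fcalc f S1 x + fcalc f S2 x)"
proof -
  have fc1: "continuous_on {0..onorm S1} f" by (rule continuous_on_subset[OF fc]) auto
  have fc2: "continuous_on {0..onorm S2} f" by (rule continuous_on_subset[OF fc]) auto
  have e1: "(\<lambda>n. fcalc f S1 (X n) - f L *\<^sub>R X n) \<longlonglongrightarrow> 0"
    by (rule fcalc_eig[OF P1 fc1 X _ l1]) (use L in auto)
  have e2: "(\<lambda>n. fcalc f S2 (X n) - f L *\<^sub>R X n) \<longlonglongrightarrow> 0"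
    by (rule fcalc_eig[OF P2 fc2 X _ l2]) (use L in auto)
  define G where "G = (\<lambda>x. fcalc f S1 x + fcalc f S2 x)"
  have GB: "bop G" unfolding G_def by (rule bop_plus[OF fcalc_bop[OF P1 fc1] fcalc_bop[OF P2 fc2]])
  define g where "g = (\<lambda>n. G (X n) - (2 * f L) *\<^sub>R X n)"
  have g: "g \<longlonglongrightarrow> 0"
  proof -
    have "(\<lambda>n. (fcalc f S1 (X n) - f L *\<^sub>R X n) + (fcalc f S2 (X n) - f L *\<^sub>R X n)) \<longlonglongrightarrow> 0 + 0"
      by (rule tendsto_add[OF e1 e2])
    moreover have "(\<lambda>n. (fcalc f S1 (X n) - f L *\<^sub>R X n) + (fcalc f S2 (X n) - f L *\<^sub>R X n)) = g"
      by (rule ext) (simp add: g_def G_def algebra_simps scaleR_add_left[symmetric])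
    ultimately show ?thesis by simp
  qed
  have "\<bar>2 * f L\<bar> \<le> onorm G"
  proof (rule LIMSEQ_le_const2)
    show "(\<lambda>n. \<bar>2 * f L\<bar> - norm (g n)) \<longlonglongrightarrow> \<bar>2 * f L\<bar>"
      using tendsto_diff[OF tendsto_const[of "\<bar>2 * f L\<bar>"] tendsto_norm_zero[OF g]] by simp
    show "\<exists>N. \<forall>n\<ge>N. \<bar>2 * f L\<bar> - norm (g n) \<le> onorm G"
    proof (intro exI allI impI)
      fix n
      have "\<bar>2 * f L\<bar> = norm ((2 * f L) *\<^sub>R X n)" using X[of n] by simp
      also have "\<dots> \<le> norm (G (X n)) + norm (g n)"
        using norm_triangle_ineq[of "G (X n)" "- g n"] by (simp add: g_def norm_minus_commute)
      also have "norm (G (X n)) \<le> onorm G" using bop_norm[OF GB, of "X n"] X[of n] by simp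
      finally show "\<bar>2 * f L\<bar> - norm (g n) \<le> onorm G" by simp
    qed
  qed
  then show ?thesis by (simp add: G_def)
qed




lemma cinner_near:
  fixes Q :: "'a::complex_inner \<Rightarrow> 'a"
  assumes X: "\<And>n. norm (X n) = 1" and l: "(\<lambda>n. Q (X n) - M *\<^sub>R X n) \<longlonglongrightarrow> 0"
  shows "(\<lambda>n. Re (cinner (X n) (Q (X n)))) \<longlonglongrightarrow> M"
proof -
  have a: "(\<lambda>n. Re (cinner (X n) (Q (X n) - M *\<^sub>R X n))) \<longlonglongrightarrow> 0"
  proof (rule Lim_null_comparison)
    show "\<forall>\<^sub>F n in sequentially. norm (Re (cinner (X n) (Q (X n) - M *\<^sub>R X n))) \<le> norm (Q (X n) - M *\<^sub>R X n)"
    proof (rule always_eventually, rule allI)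
      fix n
      have "\<bar>Re (cinner (X n) (Q (X n) - M *\<^sub>R X n))\<bar> \<le> cmod (cinner (X n) (Q (X n) - M *\<^sub>R X n))"
        by (rule abs_Re_le_cmod)
      also have "\<dots> \<le> norm (X n) * norm (Q (X n) - M *\<^sub>R X n)" by (rule cinner_cs)
      finally show "norm (Re (cinner (X n) (Q (X n) - M *\<^sub>R X n))) \<le> norm (Q (X n) - M *\<^sub>R X n)"
        using X[of n] by simp
    qed
    show "(\<lambda>n. norm (Q (X n) - M *\<^sub>R X n)) \<longlonglongrightarrow> 0" by (rule tendsto_norm_zero[OF l])
  qed
  have e: "Re (cinner (X n) (Q (X n))) = M + Re (cinner (X n) (Q (X n) - M *\<^sub>R X n))" for n
    using X[of n] by (simp add: cinner_diff_right cinner_scaleR_right Re_cinner_self)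
  show ?thesis unfolding e using tendsto_add[OF tendsto_const[of M] a] by simp
qed

theorem theorem2p4:
  fixes A :: "'a::chilbert \<Rightarrow> 'a" and f :: "real \<Rightarrow> real"
  assumes nontriv: "\<exists>x::'a. x \<noteq> 0"
    and hypo: "hyponormal A"
    and f_nonneg: "\<forall>t\<ge>0. 0 \<le> f t"
    and f_mono: "mono_on {0..} f"
    and f_opconv: "operator_convex TYPE('a) f"
  shows "f (numrad A) \<le> 1/2 * onorm (\<lambda>x.
            fcalc f (\<lambda>y. (1 / (1 + (xi_op A)\<^sup>2 / 8)) *\<^sub>R abs_op A y) x +
            fcalc f (\<lambda>y. (1 / (1 + (xi_op A)\<^sup>2 / 8)) *\<^sub>R abs_op (adj A) y) x)"
proof -
  have B: "bop A" using hypo by (simp add: hyponormal_def)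
  have hp: "pos_op (\<lambda>x. adj A (A x) - A (adj A x))" using hypo by (simp add: hyponormal_def)
  define As where "As = adj A"
  have AsB: "bop As" unfolding As_def by (rule adj_bop[OF B])
  have AsAs: "adj As = A" unfolding As_def by (rule adj_adj[OF B])
  have hyp: "norm (As x) \<le> norm (A x)" for x
  proof -
    have h0: "0 \<le> Re (cinner x (adj A (A x) - A (adj A x)))" by (rule pos_opD[OF hp])
    have h1: "cinner x (adj A (A x)) = cinner (A x) (A x)" by (rule adj_prop[OF B, symmetric])
    have h2: "cinner x (A (adj A x)) = cinner (adj A x) (adj A x)" by (rule adj_prop2[OF B, symmetric])
    have "(norm (As x))\<^sup>2 \<le> (norm (A x))\<^sup>2"
      using h0 unfolding cinner_diff_right h1 h2 by (simp add: Re_cinner_self As_def)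
    then show ?thesis by (rule power2_le_imp_le) simp
  qed
  have fc: "continuous_on {0..} f" using f_opconv by (simp add: operator_convex_def)
  define M where "M = onorm A"
  have M0: "0 \<le> M" by (simp add: M_def bop_onorm_nonneg[OF B])
  have AsM: "onorm As \<le> M"
    unfolding As_def by (rule onorm_bound[OF M0]) (simp add: adj_norm[OF B] M_def)
  define Q1 where "Q1 = abs_op A"
  define Q2 where "Q2 = abs_op As"
  have Q1P: "pos_op Q1" unfolding Q1_def by (rule abs_op_facts(1)[OF B])
  have Q2P: "pos_op Q2" unfolding Q2_def by (rule abs_op_facts(1)[OF AsB])
  have Q1Q: "Q1 (Q1 x) = adj A (A x)" for x unfolding Q1_def by (rule abs_op_facts(2)[OF B])
  have Q2Q: "Q2 (Q2 x) = adj As (As x)" for x unfolding Q2_def by (rule abs_op_facts(2)[OF AsB])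
  have Q1n: "norm (Q1 x) = norm (A x)" for x unfolding Q1_def by (rule abs_op_facts(3)[OF B])
  have Q2n: "norm (Q2 x) = norm (As x)" for x unfolding Q2_def by (rule abs_op_facts(3)[OF AsB])
  define c where "c = 1 / (1 + (xi_op A)\<^sup>2 / 8)"
  have c0: "0 < c"
  proof -
    have "0 < 1 + (xi_op A)\<^sup>2 / 8" by (simp add: add_pos_nonneg)
    then show ?thesis by (simp add: c_def)
  qed
  define S1 where "S1 = (\<lambda>y. c *\<^sub>R Q1 y)"
  define S2 where "S2 = (\<lambda>y. c *\<^sub>R Q2 y)"
  have S1P: "pos_op S1" unfolding S1_def by (rule pos_scale[OF Q1P]) (use c0 in simp)
  have S2P: "pos_op S2" unfolding S2_def by (rule pos_scale[OF Q2P]) (use c0 in simp)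
  obtain X where X1: "\<And>n. norm (X n) = 1"
    and l1: "(\<lambda>n. S1 (X n) - M *\<^sub>R X n) \<longlonglongrightarrow> 0" and l2: "(\<lambda>n. S2 (X n) - M *\<^sub>R X n) \<longlonglongrightarrow> 0"
    and o1: "M \<le> onorm S1" and o2: "M \<le> onorm S2"
  proof (cases "M = 0")
    case True
    have A0: "A x = 0" for x using True onorm_eq_0[OF bop_bl[OF B]] by (simp add: M_def)
    have Q10: "Q1 x = 0" for x using Q1n[of x] A0[of x] by simp
    have Q20: "Q2 x = 0" for x using Q2n[of x] hyp[of x] A0[of x] by simp
    obtain u :: 'a where u: "u \<noteq> 0" using nontriv by blast
    define v where "v = (1 / norm u) *\<^sub>R u"
    have v1: "norm v = 1" using u by (simp add: v_def)
    show ?thesis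
    proof (rule that[of "\<lambda>n. v"])
      show "norm v = 1" for n :: nat by (rule v1)
      show "(\<lambda>n. S1 v - M *\<^sub>R v) \<longlonglongrightarrow> 0" by (simp add: S1_def Q10 True)
      show "(\<lambda>n. S2 v - M *\<^sub>R v) \<longlonglongrightarrow> 0" by (simp add: S2_def Q20 True)
      show "M \<le> onorm S1" using True bop_onorm_nonneg[OF pos_op_bop[OF S1P]] by simp
      show "M \<le> onorm S2" using True bop_onorm_nonneg[OF pos_op_bop[OF S2P]] by simp
    qed
  next
    case False
    then have Mp: "0 < M" using M0 by simp
    have "\<forall>n. \<exists>x. norm x = 1 \<and> M - epsn n \<le> norm (As x)"
      using hypo_approx[OF B _ epsn_pos] Mp by (simp add: M_def As_def)
    then obtain X where X1: "\<And>n. norm (X n) = 1" and Xl: "\<And>n. M - epsn n \<le> norm (As (X n))"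
      by metis
    have AXM: "norm (A (X n)) \<le> M" for n using bop_norm[OF B, of "X n"] X1[of n] by (simp add: M_def)
    have limM: "(\<lambda>n. M - epsn n) \<longlonglongrightarrow> M"
      using tendsto_diff[OF tendsto_const[of M] epsn_lim] by simp
    have tA: "(\<lambda>n. norm (A (X n))) \<longlonglongrightarrow> M"
    proof (rule tendsto_sandwich[OF _ _ limM tendsto_const])
      show "\<forall>\<^sub>F n in sequentially. M - epsn n \<le> norm (A (X n))"
        using Xl hyp order_trans by (intro always_eventually) blast
      show "\<forall>\<^sub>F n in sequentially. norm (A (X n)) \<le> M" using AXM by simp
    qed
    have tAs: "(\<lambda>n. norm (As (X n))) \<longlonglongrightarrow> M"
    proof (rule tendsto_sandwich[OF _ _ limM tendsto_const])
      show "\<forall>\<^sub>F n in sequentially. M - epsn n \<le> norm (As (X n))" using Xl by simp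
      show "\<forall>\<^sub>F n in sequentially. norm (As (X n)) \<le> M" using AXM hyp order_trans by (intro always_eventually) blast
    qed
    have q1: "(\<lambda>n. Q1 (X n) - M *\<^sub>R X n) \<longlonglongrightarrow> 0"
    proof (rule Lim_null_comparison)
      show "\<forall>\<^sub>F n in sequentially. norm (Q1 (X n) - M *\<^sub>R X n) \<le> sqrt (2 * (M\<^sup>2 - (norm (A (X n)))\<^sup>2))"
        by (intro always_eventually allI real_le_rsqrt)
           (unfold Q1_def, rule abs_op_approx[OF B Mp _ X1], simp add: M_def)
      have "(\<lambda>n. sqrt (2 * (M\<^sup>2 - (norm (A (X n)))\<^sup>2))) \<longlonglongrightarrow> sqrt (2 * (M\<^sup>2 - M\<^sup>2))"
        by (intro tendsto_intros tA)
      then show "(\<lambda>n. sqrt (2 * (M\<^sup>2 - (norm (A (X n)))\<^sup>2))) \<longlonglongrightarrow> 0" by simp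
    qed
    have q2: "(\<lambda>n. Q2 (X n) - M *\<^sub>R X n) \<longlonglongrightarrow> 0"
    proof (rule Lim_null_comparison)
      show "\<forall>\<^sub>F n in sequentially. norm (Q2 (X n) - M *\<^sub>R X n) \<le> sqrt (2 * (M\<^sup>2 - (norm (As (X n)))\<^sup>2))"
        by (intro always_eventually allI real_le_rsqrt)
           (unfold Q2_def, rule abs_op_approx[OF AsB Mp AsM X1])
      have "(\<lambda>n. sqrt (2 * (M\<^sup>2 - (norm (As (X n)))\<^sup>2))) \<longlonglongrightarrow> sqrt (2 * (M\<^sup>2 - M\<^sup>2))"
        by (intro tendsto_intros tAs)
      then show "(\<lambda>n. sqrt (2 * (M\<^sup>2 - (norm (As (X n)))\<^sup>2))) \<longlonglongrightarrow> 0" by simp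
    qed
    
    have mono: "Re (cinner x (Q2 x)) \<le> Re (cinner x (Q1 x))" for x
    proof (rule sqrt_mono_op[OF Q1P Q2P])
      fix y
      have a: "cinner y (Q1 (Q1 y)) = cinner (A y) (A y)" unfolding Q1Q by (rule adj_prop[OF B, symmetric])
      have b: "cinner y (Q2 (Q2 y)) = cinner (As y) (As y)" unfolding Q2Q by (rule adj_prop[OF AsB, symmetric])
      have "(norm (As y))\<^sup>2 \<le> (norm (A y))\<^sup>2" using hyp[of y] by (simp add: power_mono)
      then show "Re (cinner y (Q2 (Q2 y))) \<le> Re (cinner y (Q1 (Q1 y)))" by (simp add: a b Re_cinner_self)
    qed
    define num where "num = (\<lambda>x. Re (cinner x (Q1 x - Q2 x)))"
    define den where "den = (\<lambda>x. Re (cinner x (Q1 x + Q2 x)))"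
    define Xi where "Xi = {num x / den x | x. norm x = 1 \<and> den x \<noteq> 0}"
    have xiXi: "xi_op A = Inf Xi"
      by (simp add: xi_op_def Xi_def num_def den_def Q1_def Q2_def As_def)
    have Xi0: "0 \<le> t" if "t \<in> Xi" for t
    proof -
      from that obtain x where t: "t = num x / den x" unfolding Xi_def by blast
      have "0 \<le> num x" using mono[of x] by (simp add: num_def cinner_diff_right)
      moreover have "0 \<le> den x" using pos_opD[OF Q1P, of x] pos_opD[OF Q2P, of x]
        by (simp add: den_def cinner_add_right)
      ultimately show ?thesis by (simp add: t)
    qed
    have r1: "(\<lambda>n. Re (cinner (X n) (Q1 (X n)))) \<longlonglongrightarrow> M" by (rule cinner_near[OF X1 q1])
    have r2: "(\<lambda>n. Re (cinner (X n) (Q2 (X n)))) \<longlonglongrightarrow> M" by (rule cinner_near[OF X1 q2])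
    have tn: "(\<lambda>n. num (X n)) \<longlonglongrightarrow> 0"
      using tendsto_diff[OF r1 r2] by (simp add: num_def cinner_diff_right)
    have td: "(\<lambda>n. den (X n)) \<longlonglongrightarrow> 2 * M"
      using tendsto_add[OF r1 r2] by (simp add: den_def cinner_add_right)
    have tr: "(\<lambda>n. num (X n) / den (X n)) \<longlonglongrightarrow> 0 / (2 * M)"
      by (rule tendsto_divide[OF tn td]) (use Mp in simp)
    have ev: "\<forall>\<^sub>F n in sequentially. 0 < den (X n)" by (rule order_tendstoD(1)[OF td]) (use Mp in simp)
    then obtain N where N: "\<And>n. n \<ge> N \<Longrightarrow> 0 < den (X n)" by (auto simp: eventually_sequentially)
    have inXi: "num (X n) / den (X n) \<in> Xi" if "n \<ge> N" for n
      using N[OF that] X1[of n] unfolding Xi_def by force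
    have Xine: "Xi \<noteq> {}" using inXi[of N] by auto
    have Xibd: "bdd_below Xi" using Xi0 by (intro bdd_belowI) blast
    have "Inf Xi \<le> 0 / (2 * M)"
    proof (rule LIMSEQ_le_const[OF tr])
      show "\<exists>N. \<forall>n\<ge>N. Inf Xi \<le> num (X n) / den (X n)"
        using cInf_lower[OF inXi Xibd] by blast
    qed
    moreover have "0 \<le> Inf Xi" by (rule cInf_greatest[OF Xine Xi0])
    ultimately have xi0: "xi_op A = 0" using xiXi by simp
    have c1: "c = 1" by (simp add: c_def xi0)
    have S1Q: "S1 = Q1" by (simp add: S1_def c1)
    have S2Q: "S2 = Q2" by (simp add: S2_def c1)
    show ?thesis
    proof (rule that[OF X1])
      show "(\<lambda>n. S1 (X n) - M *\<^sub>R X n) \<longlonglongrightarrow> 0" using q1 by (simp add: S1Q)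
      show "(\<lambda>n. S2 (X n) - M *\<^sub>R X n) \<longlonglongrightarrow> 0" using q2 by (simp add: S2Q)
      show "M \<le> onorm S1"
      proof (rule LIMSEQ_le_const2[OF tA])
        show "\<exists>N. \<forall>n\<ge>N. norm (A (X n)) \<le> onorm S1"
        proof (intro exI allI impI)
          fix n
          have "norm (Q1 (X n)) \<le> onorm Q1 * norm (X n)" by (rule bop_norm[OF pos_op_bop[OF Q1P]])
          then show "norm (A (X n)) \<le> onorm S1" using X1[of n] Q1n[of "X n"] by (simp add: S1Q)
        qed
      qed
      show "M \<le> onorm S2"
      proof (rule LIMSEQ_le_const2[OF tAs])
        show "\<exists>N. \<forall>n\<ge>N. norm (As (X n)) \<le> onorm S2"
        proof (intro exI allI impI)
          fix n
          have "norm (Q2 (X n)) \<le> onorm Q2 * norm (X n)" by (rule bop_norm[OF pos_op_bop[OF Q2P]])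
          then show "norm (As (X n)) \<le> onorm S2" using X1[of n] Q2n[of "X n"] by (simp add: S2Q)
        qed
      qed
    qed
  qed
  have main: "2 * f M \<le> onorm (\<lambda>x. fcalc f S1 x + fcalc f S2 x)"
    by (rule fcalc_two[OF S1P S2P fc X1 M0 o1 o2 l1 l2])
  have U: "{x::'a. norm x = 1} \<noteq> {}"
  proof -
    obtain u :: 'a where u: "u \<noteq> 0" using nontriv by blast
    then have "norm ((1 / norm u) *\<^sub>R u) = 1" by simp
    then show ?thesis by blast
  qed
  have nrM: "numrad A \<le> M"
    unfolding numrad_def
  proof (rule cSUP_least[OF U])
    fix x :: 'a assume "x \<in> {x. norm x = 1}"
    then have x: "norm x = 1" by simp
    have "cmod (cinner x (A x)) \<le> norm x * norm (A x)" by (rule cinner_cs)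
    also have "\<dots> \<le> M" using bop_norm[OF B, of x] x by (simp add: M_def)
    finally show "cmod (cinner x (A x)) \<le> M" .
  qed
  have nr0: "0 \<le> numrad A"
  proof -
    obtain x :: 'a where x: "norm x = 1" using U by blast
    have bd: "bdd_above ((\<lambda>x. cmod (cinner x (A x))) ` {x. norm x = 1})"
    proof (rule bdd_aboveI[of _ M])
      fix t assume "t \<in> (\<lambda>x. cmod (cinner x (A x))) ` {x. norm x = 1}"
      then obtain y where y: "norm y = 1" "t = cmod (cinner y (A y))" by auto
      have "cmod (cinner y (A y)) \<le> norm y * norm (A y)" by (rule cinner_cs)
      also have "\<dots> \<le> M" using bop_norm[OF B, of y] y by (simp add: M_def)
      finally show "t \<le> M" using y by simp
    qed
    show ?thesis unfolding numrad_def by (rule cSUP_upper2[OF bd, of x]) (use x in auto)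
  qed
  have "f (numrad A) \<le> f M" by (rule mono_onD[OF f_mono]) (use nr0 nrM M0 in auto)
  then have "f (numrad A) \<le> 1/2 * onorm (\<lambda>x. fcalc f S1 x + fcalc f S2 x)" using main by simp
  then show ?thesis by (simp only: S1_def S2_def c_def Q1_def Q2_def As_def)
qed


end
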